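(* Let $f\colon V_0\to\mathbb{R}$ be continuous such that $\Gamma_f$ is a ruled surface. Then there are $u\in[0,\infty]$ and $\theta\in\mathbb{R}$ such that $s_{t,t}^{-1}(\Gamma_f^+)\to\mathrm{rot}_\theta(\mathrm{BP}_u^+)$ locally as $t\to\infty$. Furthermore, if $u=0$, then $\Gamma_f$ is a vertical plane, i.e., $\Gamma_f=\{(x,y,z):ax+by=c\}$ for some $(a,b)\neq(0,0)$, $c\in\mathbb{R}$.
   Context: $\mathbb{H}$ is $\mathbb{R}^3$ with product $(x,y,z)\cdot(x',y',z')=(x+x',y+y',z+z'+\frac{xy'-yx'}{2})$; $Y^t=(0,t,0)$. A horizontal line is a set $\{p\cdot tv:t\in\mathbb{R}\}$ with $v=(a,b,0)\neq0$; a ruled surface is a union of horizontal line segments (rulings) with endpoints in its boundary. $V_0=\{(x,0,z)\}$; $\Gamma_f=\{u\cdot Y^{f(u)}\}$, $\Gamma_f^+=\{u\cdot Y^s:s>f(u)\}$. $s_{t,t}(x,y,z)=(tx,ty,t^2z)$; $\mathrm{rot}_\theta$ is rotation by $\theta$ about the $z$-axis, $(x,y,z)\mapsto(x\cos\theta-y\sin\theta,x\sin\theta+y\cos\theta,z)$. For $0\le u<\infty$, $\mathrm{BP}_u^+=\Gamma_{b_u}^+$ where $b_u(x,0,z)=ux$ if $z<-\frac u2x^2$, $b_u(x,0,z)=-\frac{2z}{x}$ if $|z|\le\frac u2x^2$, $b_u(x,0,z)=-ux$ if $z>\frac u2 x^2$ (for $u=0$, $b_0\equiv0$); and $\mathrm{BP}_\infty^+=\{(x,y,z):xz>0\}$.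 Local convergence $G_t\to G$ means that for every compact $C$, the Lebesgue measure of $(G_t\triangle G)\cap C$ tends to $0$. *)

theory Defs
  imports "HOL-Analysis.Analysis"
begin

type_synonym heis = "real \<times> real \<times> real"

definition hmult :: "heis \<Rightarrow> heis \<Rightarrow> heis" where
  "hmult p q = (case p of (x, y, z) \<Rightarrow> case q of (x', y', z') \<Rightarrow>
      (x + x', y + y', z + z' + (x * y' - y * x') / 2))"

definition Yt :: "real \<Rightarrow> heis" where
  "Yt t = (0, t, 0)"

definition hline :: "heis \<Rightarrow> real \<Rightarrow> real \<Rightarrow> heis set" where
  "hline p a b = {hmult p (t * a, t * b, 0) | t. t \<in> (UNIV :: real set)}"

text \<open>A ruled surface without boundary (such as an entire intrinsic graph):
  every point lies on a ruling, which, having its endpoints in the (empty)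
  boundary, is a full horizontal line contained in the surface.\<close>
definition ruled_surface :: "heis set \<Rightarrow> bool" where
  "ruled_surface S \<longleftrightarrow> (\<forall>p\<in>S. \<exists>a b. (a, b) \<noteq> (0, 0) \<and> hline p a b \<subseteq> S)"

text \<open>Functions on V_0 = {(x,0,z)} are represented as f x z.\<close>
definition graph_Y :: "(real \<Rightarrow> real \<Rightarrow> real) \<Rightarrow> heis set" where
  "graph_Y f = {hmult (x, 0, z) (Yt (f x z)) | x z. True}"

definition epi_Y :: "(real \<Rightarrow> real \<Rightarrow> real) \<Rightarrow> heis set" where
  "epi_Y f = {hmult (x, 0, z) (Yt s) | x z s. s > f x z}"

definition sdil :: "real \<Rightarrow> heis \<Rightarrow> heis" where
  "sdil t p = (case p of (x, y, z) \<Rightarrow> (t * x, t * y, t\<^sup>2 * z))"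

definition rot :: "real \<Rightarrow> heis \<Rightarrow> heis" where
  "rot \<theta> p = (case p of (x, y, z) \<Rightarrow>
      (x * cos \<theta> - y * sin \<theta>, x * sin \<theta> + y * cos \<theta>, z))"

definition bfun :: "real \<Rightarrow> real \<Rightarrow> real \<Rightarrow> real" where
  "bfun u x z = (if u = 0 then 0
     else if z < - (u / 2) * x\<^sup>2 then u * x
     else if \<bar>z\<bar> \<le> (u / 2) * x\<^sup>2 then - 2 * z / x
     else - u * x)"

definition BP :: "ereal \<Rightarrow> heis set" where
  "BP u = (if u = \<infinity> then {(x, y, z). x * z > 0} else epi_Y (bfun (real_of_ereal u)))"

definition local_conv :: "(real \<Rightarrow> heis set) \<Rightarrow> heis set \<Rightarrow> bool" where
  "local_conv G H \<longleftrightarrow> (\<forall>C. compact C \<longrightarrow>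
      ((\<lambda>t. emeasure lborel (((G t - H) \<union> (H - G t)) \<inter> C)) \<longlongrightarrow> 0) at_top)"

end

theory Submission
  imports Defs
begin

lemma hmult_Y: "hmult (x, 0, z) (Yt s) = (x, s, z + x * s / 2)"
  by (simp add: hmult_def Yt_def)

lemma graph_Y_eq: "graph_Y f = {(X, Y, W). Y = f X (W - X * Y / 2)}"
proof (rule set_eqI)
  fix p :: heis
  obtain X Y W where p: "p = (X, Y, W)" by (cases p) auto
  show "p \<in> graph_Y f \<longleftrightarrow> p \<in> {(X, Y, W). Y = f X (W - X * Y / 2)}"
  proof
    assume "p \<in> graph_Y f"
    then obtain x z where "p = (x, f x z, z + x * f x z / 2)"
      by (auto simp: graph_Y_def hmult_Y)
    then show "p \<in> {(X, Y, W). Y = f X (W - X * Y / 2)}" by auto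
  next
    assume "p \<in> {(X, Y, W). Y = f X (W - X * Y / 2)}"
    then have "Y = f X (W - X * Y / 2)" by (auto simp: p)
    then have "p = hmult (X, 0, W - X * Y / 2) (Yt (f X (W - X * Y / 2)))"
      by (simp add: hmult_Y p)
    then show "p \<in> graph_Y f" unfolding graph_Y_def by blast
  qed
qed

lemma epi_Y_eq: "epi_Y f = {(X, Y, W). Y > f X (W - X * Y / 2)}"
proof (rule set_eqI)
  fix p :: heis
  obtain X Y W where p: "p = (X, Y, W)" by (cases p) auto
  show "p \<in> epi_Y f \<longleftrightarrow> p \<in> {(X, Y, W). Y > f X (W - X * Y / 2)}"
  proof
    assume "p \<in> epi_Y f"
    then obtain x z s where "p = (x, s, z + x * s / 2)" "s > f x z"
      by (auto simp: epi_Y_def hmult_Y)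
    then show "p \<in> {(X, Y, W). Y > f X (W - X * Y / 2)}" by auto
  next
    assume "p \<in> {(X, Y, W). Y > f X (W - X * Y / 2)}"
    then have "Y > f X (W - X * Y / 2)" by (auto simp: p)
    moreover have "p = hmult (X, 0, W - X * Y / 2) (Yt Y)"
      by (simp add: hmult_Y p)
    ultimately show "p \<in> epi_Y f" unfolding epi_Y_def by blast
  qed
qed

definition rulF :: "(real \<Rightarrow> real \<Rightarrow> real) \<Rightarrow> bool" where
  "rulF F \<longleftrightarrow> (\<forall>x0 z0. \<exists>b. \<forall>s. F (x0 + s) (z0 - F x0 z0 * s - b * s\<^sup>2 / 2) = F x0 z0 + b * s)"

lemma ruled_rulF:
  assumes "ruled_surface (graph_Y f)"
  shows "rulF f"
  unfolding rulF_def
proof (intro allI)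
  fix x0 z0
  define y0 where "y0 = f x0 z0"
  define p where "p = (x0, y0, z0 + x0 * y0 / 2)"
  have "p \<in> graph_Y f" by (simp add: graph_Y_eq p_def y0_def)
  with assms obtain a b where ab: "(a, b) \<noteq> (0, 0)" "hline p a b \<subseteq> graph_Y f"
    unfolding ruled_surface_def by blast
  have key: "y0 + t * b = f (x0 + t * a) (z0 + x0 * y0 / 2 + (x0 * (t * b) - y0 * (t * a)) / 2
       - (x0 + t * a) * (y0 + t * b) / 2)" for t
  proof -
    have "hmult p (t * a, t * b, 0) \<in> graph_Y f" using ab(2) unfolding hline_def by blast
    then show ?thesis by (simp add: graph_Y_eq hmult_def p_def)
  qed
  have "a \<noteq> 0"
  proof
    assume a0: "a = 0"
    then have "b \<noteq> 0" using ab(1) by auto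
    have e: "z0 + x0 * y0 / 2 + (x0 * (1 * b) - y0 * (1 * a)) / 2
       - (x0 + 1 * a) * (y0 + 1 * b) / 2 = z0" using a0 by (simp add: algebra_simps)
    have "y0 + 1 * b = f x0 z0" using key[of 1] a0 unfolding e by simp
    then show False using \<open>b \<noteq> 0\<close> y0_def by simp
  qed
  show "\<exists>b. \<forall>s. f (x0 + s) (z0 - f x0 z0 * s - b * s\<^sup>2 / 2) = f x0 z0 + b * s"
  proof (intro exI allI)
    fix s
    have K: "y0 + (s / a) * b = f (x0 + (s / a) * a) (z0 + x0 * y0 / 2 + (x0 * ((s / a) * b) - y0 * ((s / a) * a)) / 2
       - (x0 + (s / a) * a) * (y0 + (s / a) * b) / 2)" by (rule key)
    have e2: "z0 + x0 * y0 / 2 + (x0 * ((s / a) * b) - y0 * ((s / a) * a)) / 2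
       - (x0 + (s / a) * a) * (y0 + (s / a) * b) / 2 = z0 - y0 * s - (b / a) * s\<^sup>2 / 2"
      using \<open>a \<noteq> 0\<close> by (simp add: field_simps power2_eq_square)
    have e1: "x0 + (s / a) * a = x0 + s" using \<open>a \<noteq> 0\<close> by simp
    have e3: "y0 + (s / a) * b = y0 + (b / a) * s" by simp
    from K e1 e2 e3 show "f (x0 + s) (z0 - f x0 z0 * s - (b / a) * s\<^sup>2 / 2) = f x0 z0 + (b / a) * s"
      unfolding y0_def by metis
  qed
qed

definition rl :: "(real \<Rightarrow> real \<Rightarrow> real) \<Rightarrow> real \<Rightarrow> real \<Rightarrow> bool" where
  "rl F c b \<longleftrightarrow> (\<forall>s. F s (c - F 0 c * s - b * s\<^sup>2 / 2) = F 0 c + b * s)"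

definition Sl :: "(real \<Rightarrow> real \<Rightarrow> real) \<Rightarrow> real set" where
  "Sl F = {b. \<exists>c. rl F c b}"

lemma rl_exists: assumes "rulF F" shows "\<exists>b. rl F c b"
proof -
  obtain b where "\<forall>s. F (0 + s) (c - F 0 c * s - b * s\<^sup>2 / 2) = F 0 c + b * s"
    using assms unfolding rulF_def by blast
  then show ?thesis unfolding rl_def by auto
qed

lemma Sl_nonempty: assumes "rulF F" shows "Sl F \<noteq> {}"
  using rl_exists[OF assms, of 0] unfolding Sl_def by auto

lemma reach:
  assumes "rulF F"
  shows "\<exists>c b. rl F c b \<and> z = c - F 0 c * x - b * x\<^sup>2 / 2 \<and> F x z = F 0 c + b * x"
proof -
  obtain b where b: "\<And>s. F (x + s) (z - F x z * s - b * s\<^sup>2 / 2) = F x z + b * s"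
    using assms unfolding rulF_def by blast
  define y where "y = F x z"
  define c where "c = z + y * x - b * x\<^sup>2 / 2"
  have F0: "F 0 c = y - b * x"
  proof -
    have "F (x + - x) (z - F x z * (- x) - b * (- x)\<^sup>2 / 2) = F x z + b * (- x)" by (rule b)
    moreover have "z - F x z * (- x) - b * (- x)\<^sup>2 / 2 = c" by (simp add: c_def y_def)
    ultimately show ?thesis by (simp add: y_def)
  qed
  have "rl F c b" unfolding rl_def
  proof
    fix s
    have A1: "F (x + (s - x)) (z - F x z * (s - x) - b * (s - x)\<^sup>2 / 2) = F x z + b * (s - x)" by (rule b)
    have A2: "z - F x z * (s - x) - b * (s - x)\<^sup>2 / 2 = c - F 0 c * s - b * s\<^sup>2 / 2"
      unfolding F0 by (simp add: c_def y_def power2_eq_square field_simps)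
    have A3: "x + (s - x) = s" by simp
    have A4: "F x z + b * (s - x) = F 0 c + b * s" unfolding F0 y_def by (simp add: algebra_simps)
    show "F s (c - F 0 c * s - b * s\<^sup>2 / 2) = F 0 c + b * s" using A1 A2 A3 A4 by metis
  qed
  moreover have "z = c - F 0 c * x - b * x\<^sup>2 / 2"
    unfolding F0 by (simp add: c_def power2_eq_square algebra_simps)
  moreover have "F x z = F 0 c + b * x" by (simp add: F0 y_def)
  ultimately show ?thesis by blast
qed

lemma noncross:
  assumes r1: "rl F c1 b1" and r2: "rl F c2 b2" and lt: "c1 < c2"
  shows "c1 - F 0 c1 * x - b1 * x\<^sup>2 / 2 \<le> c2 - F 0 c2 * x - b2 * x\<^sup>2 / 2"
proof (rule ccontr)
  assume neg: "\<not> ?thesis"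
  define D where "D = (\<lambda>x. (c2 - F 0 c2 * x - b2 * x\<^sup>2 / 2) - (c1 - F 0 c1 * x - b1 * x\<^sup>2 / 2))"
  have Dx: "D x < 0" using neg by (simp add: D_def)
  have D0: "D 0 > 0" using lt by (simp add: D_def)
  have cont: "isCont D t" for t unfolding D_def by (intro continuous_intros) auto
  have "\<exists>r. D r = 0"
  proof (cases "x \<ge> 0")
    case True
    then show ?thesis using IVT2[of D x 0 0] Dx D0 cont by force
  next
    case False
    then show ?thesis using IVT[of D x 0 0] Dx D0 cont by force
  qed
  then obtain r where Dr: "D r = 0" by blast
  define \<zeta> where "\<zeta> = c1 - F 0 c1 * r - b1 * r\<^sup>2 / 2"
  have z2: "\<zeta> = c2 - F 0 c2 * r - b2 * r\<^sup>2 / 2" using Dr by (simp add: D_def \<zeta>_def)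
  have "F r \<zeta> = F 0 c1 + b1 * r" using r1 unfolding rl_def \<zeta>_def by blast
  moreover have "F r \<zeta> = F 0 c2 + b2 * r" using r2 unfolding rl_def z2 by blast
  ultimately have sl: "F 0 c2 - F 0 c1 = - (b2 - b1) * r" by (simp add: algebra_simps)
  define db where "db = b2 - b1"
  have "c2 - c1 = (F 0 c2 - F 0 c1) * r + (b2 - b1) * r\<^sup>2 / 2" using Dr by (simp add: D_def field_simps)
  also have "\<dots> = - (b2 - b1) * r * r + (b2 - b1) * r\<^sup>2 / 2" using sl by simp
  also have "\<dots> = - db * r\<^sup>2 / 2" by (simp add: db_def power2_eq_square field_simps)
  finally have dc: "c2 - c1 = - db * r\<^sup>2 / 2" .
  have sl': "F 0 c2 - F 0 c1 = - db * r" using sl by (simp add: db_def)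
  have "db * r\<^sup>2 < 0" using dc lt by simp
  then have "db < 0" by (metis mult_nonneg_nonneg not_less zero_le_power2)
  have "D x = (c2 - c1) - (F 0 c2 - F 0 c1) * x - db * x\<^sup>2 / 2"
    by (simp add: D_def db_def field_simps)
  also have "\<dots> = - db * r\<^sup>2 / 2 + db * r * x - db * x\<^sup>2 / 2"
    unfolding dc sl' by (simp add: algebra_simps)
  also have "\<dots> = - db * (x - r)\<^sup>2 / 2" by (simp add: power2_eq_square algebra_simps)
  also have "\<dots> \<ge> 0" using \<open>db < 0\<close> by (simp add: mult_nonpos_nonneg)
  finally show False using Dx by simp
qed

lemma quad_nonneg:
  fixes d e g :: real
  assumes H: "\<And>x. d - e * x - g * x\<^sup>2 / 2 \<ge> 0"
  shows "g \<le> 0 \<and> e\<^sup>2 \<le> - 2 * g * d"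
proof -
  have d0: "d \<ge> 0" using H[of 0] by simp
  have g0: "g \<le> 0"
  proof (rule ccontr)
    assume "\<not> g \<le> 0"
    then have gp: "g > 0" by simp
    define x where "x = sqrt ((2 * d + 1) / g)"
    have x2: "x\<^sup>2 = (2 * d + 1) / g" unfolding x_def using gp d0 by simp
    have "g * x\<^sup>2 = 2 * d + 1" using gp by (simp add: x2)
    moreover have "d - e * x - g * x\<^sup>2 / 2 \<ge> 0" "d - e * (- x) - g * (- x)\<^sup>2 / 2 \<ge> 0" using H[of x] H[of "-x"] by auto
    ultimately show False by simp
  qed
  have "e\<^sup>2 \<le> - 2 * g * d"
  proof (cases "g = 0")
    case True
    have "e = 0"
    proof (rule ccontr)
      assume "e \<noteq> 0"
      have "d - e * ((d + 1) / e) - g * ((d + 1) / e)\<^sup>2 / 2 \<ge> 0" by (rule H)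
      then show False using True \<open>e \<noteq> 0\<close> by simp
    qed
    then show ?thesis using True by simp
  next
    case False
    then have gn: "g < 0" using g0 by simp
    have h: "d - e * (- e / g) - g * (- e / g)\<^sup>2 / 2 \<ge> 0" by (rule H)
    have A: "(d - e * (- e / g) - g * (- e / g)\<^sup>2 / 2) * (- 2 * g) \<ge> 0"
      by (rule mult_nonneg_nonneg[OF h]) (use gn in simp)
    have B: "(d - e * (- e / g) - g * (- e / g)\<^sup>2 / 2) * (- 2 * g) = - 2 * g * d - e\<^sup>2"
      using gn by (simp add: power2_eq_square field_simps)
    show ?thesis using A unfolding B by linarith
  qed
  with g0 show ?thesis by simp
qed

lemma rl_quad:
  assumes "rl F c1 b1" "rl F c2 b2" "c1 < c2"
  shows "b2 \<le> b1 \<and> (F 0 c2 - F 0 c1)\<^sup>2 \<le> 2 * (b1 - b2) * (c2 - c1)"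
proof -
  have "(c2 - c1) - (F 0 c2 - F 0 c1) * x - (b2 - b1) * x\<^sup>2 / 2 \<ge> 0" for x
    using noncross[OF assms, of x] by (simp add: field_simps)
  from quad_nonneg[OF this] show ?thesis by (simp add: algebra_simps)
qed

lemma rl_mono: "rl F c1 b1 \<Longrightarrow> rl F c2 b2 \<Longrightarrow> c1 < c2 \<Longrightarrow> b2 \<le> b1"
  using rl_quad by blast

lemma rl_disc:
  assumes "rl F c1 b1" "rl F c2 b2"
  shows "(F 0 c2 - F 0 c1)\<^sup>2 \<le> 2 * (b1 - b2) * (c2 - c1)"
proof -
  consider "c1 < c2" | "c2 < c1" | "c1 = c2" by linarith
  then show ?thesis
  proof cases
    case 1 then show ?thesis using rl_quad[OF assms] by blast
  next
    case 2
    have "(F 0 c1 - F 0 c2)\<^sup>2 \<le> 2 * (b2 - b1) * (c1 - c2)" using rl_quad[OF assms(2,1) 2] by blast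
    then show ?thesis by (simp add: power2_commute algebra_simps)
  next
    case 3 then show ?thesis by simp
  qed
qed

definition Fm :: "(real \<Rightarrow> real \<Rightarrow> real) \<Rightarrow> real \<Rightarrow> real \<Rightarrow> real" where
  "Fm F = (\<lambda>x z. - F x (- z))"

lemma rl_Fm: "rl (Fm F) c b \<longleftrightarrow> rl F (- c) (- b)"
proof -
  have "(Fm F s (c - Fm F 0 c * s - b * s\<^sup>2 / 2) = Fm F 0 c + b * s) \<longleftrightarrow>
        (F s (- c - F 0 (- c) * s - (- b) * s\<^sup>2 / 2) = F 0 (- c) + (- b) * s)" for s
  proof -
    have e1: "Fm F s (c - Fm F 0 c * s - b * s\<^sup>2 / 2) = - F s (- c - F 0 (- c) * s - (- b) * s\<^sup>2 / 2)"
      by (simp add: Fm_def algebra_simps)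
    have e2: "Fm F 0 c + b * s = - (F 0 (- c) + (- b) * s)" by (simp add: Fm_def)
    show ?thesis unfolding e1 e2 neg_equal_iff_equal ..
  qed
  then show ?thesis unfolding rl_def by simp
qed

lemma rulF_Fm: assumes "rulF F" shows "rulF (Fm F)"
  unfolding rulF_def
proof (intro allI)
  fix x0 z0
  obtain b where b: "\<And>s. F (x0 + s) (- z0 - F x0 (- z0) * s - b * s\<^sup>2 / 2) = F x0 (- z0) + b * s"
    using assms unfolding rulF_def by blast
  show "\<exists>b. \<forall>s. Fm F (x0 + s) (z0 - Fm F x0 z0 * s - b * s\<^sup>2 / 2) = Fm F x0 z0 + b * s"
  proof (intro exI allI)
    fix s
    have "- (z0 - Fm F x0 z0 * s - (- b) * s\<^sup>2 / 2) = - z0 - F x0 (- z0) * s - b * s\<^sup>2 / 2"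
      by (simp add: Fm_def algebra_simps)
    then show "Fm F (x0 + s) (z0 - Fm F x0 z0 * s - (- b) * s\<^sup>2 / 2) = Fm F x0 z0 + (- b) * s"
      using b[of s] by (simp add: Fm_def)
  qed
qed

lemma Sl_Fm: "b \<in> Sl (Fm F) \<longleftrightarrow> - b \<in> Sl F"
proof
  assume "b \<in> Sl (Fm F)"
  then obtain c where "rl (Fm F) c b" unfolding Sl_def by blast
  then have "rl F (- c) (- b)" by (simp add: rl_Fm)
  then show "- b \<in> Sl F" unfolding Sl_def by blast
next
  assume "- b \<in> Sl F"
  then obtain c where "rl F c (- b)" unfolding Sl_def by blast
  then have "rl (Fm F) (- c) b" by (simp add: rl_Fm)
  then show "b \<in> Sl (Fm F)" unfolding Sl_def by blast
qed

lemma amgm: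
  fixes P B d a :: real
  assumes "0 \<le> B" "0 \<le> d" "P\<^sup>2 \<le> 2 * B * d"
  shows "\<bar>P\<bar> * \<bar>a\<bar> \<le> d + B * a\<^sup>2 / 2"
proof -
  have "(\<bar>P\<bar> * \<bar>a\<bar>)\<^sup>2 = P\<^sup>2 * a\<^sup>2" by (simp add: power_mult_distrib)
  also have "\<dots> \<le> 2 * B * d * a\<^sup>2" using assms(3) by (simp add: mult_right_mono)
  also have "\<dots> \<le> (d + B * a\<^sup>2 / 2)\<^sup>2"
  proof -
    have "(d + B * a\<^sup>2 / 2)\<^sup>2 - 2 * B * d * a\<^sup>2 = (d - B * a\<^sup>2 / 2)\<^sup>2"
      by (simp add: power2_eq_square algebra_simps)
    then show ?thesis by (metis diff_ge_0_iff_ge zero_le_power2)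
  qed
  finally show ?thesis
    by (rule power2_le_imp_le) (use assms in simp)
qed

lemma M1:
  assumes rF: "rulF F" and b2: "b2 \<in> Sl F" and kap: "b2 * x\<^sup>2 / 2 + z > 0" and dp: "\<delta> > 0"
  shows "eventually (\<lambda>t. \<forall>c b. rl F c b \<and> t\<^sup>2 * z = c - F 0 c * (t * x) - b * (t * x)\<^sup>2 / 2
            \<longrightarrow> c > - \<delta> * t\<^sup>2) at_top"
proof -
  obtain c2 where r2: "rl F c2 b2" using b2 unfolding Sl_def by blast
  define Y2 where "Y2 = F 0 c2"
  define \<kappa> where "\<kappa> = b2 * x\<^sup>2 / 2 + z"
  have kp: "\<kappa> > 0" using kap by (simp add: \<kappa>_def)
  define T where "T = max 1 (max (sqrt (\<bar>c2\<bar> / \<delta>) + 1) ((\<bar>Y2\<bar> * \<bar>x\<bar> + \<bar>c2\<bar>) / \<kappa> + 1))"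
  show ?thesis
  proof (rule eventually_mono[OF eventually_ge_at_top[of T]], intro allI impI)
    fix t c b
    assume tT: "T \<le> t" and H: "rl F c b \<and> t\<^sup>2 * z = c - F 0 c * (t * x) - b * (t * x)\<^sup>2 / 2"
    have t1: "t \<ge> 1" using tT unfolding T_def by linarith
    have t2: "t > sqrt (\<bar>c2\<bar> / \<delta>)" using tT unfolding T_def by linarith
    have t3: "t > (\<bar>Y2\<bar> * \<bar>x\<bar> + \<bar>c2\<bar>) / \<kappa>" using tT unfolding T_def by linarith
    have "t\<^sup>2 > \<bar>c2\<bar> / \<delta>"
    proof -
      have a0: "0 \<le> \<bar>c2\<bar> / \<delta>" using dp by (simp add: divide_nonneg_pos)
      have "sqrt (\<bar>c2\<bar> / \<delta>) \<ge> 0" using a0 by simp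
      then have "(sqrt (\<bar>c2\<bar> / \<delta>))\<^sup>2 < t\<^sup>2" using t2 by (intro power_strict_mono) auto
      then show ?thesis using a0 by simp
    qed
    then have crlt: "- \<delta> * t\<^sup>2 < c2" using dp by (simp add: field_simps)
    show "c > - \<delta> * t\<^sup>2"
    proof (rule ccontr)
      assume "\<not> c > - \<delta> * t\<^sup>2"
      then have cle: "c \<le> - \<delta> * t\<^sup>2" by simp
      define cr where "cr = - \<delta> * t\<^sup>2"
      have "\<exists>bt. rl F cr bt \<and> t\<^sup>2 * z \<le> cr - F 0 cr * (t * x) - bt * (t * x)\<^sup>2 / 2"
      proof (cases "c < cr")
        case True
        obtain br where br: "rl F cr br" using rl_exists[OF rF] by blast
        have "c - F 0 c * (t * x) - b * (t * x)\<^sup>2 / 2 \<le> cr - F 0 cr * (t * x) - br * (t * x)\<^sup>2 / 2"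
          using noncross[OF _ br True] H by blast
        then show ?thesis using H br by auto
      next
        case False
        then have "c = cr" using cle cr_def by simp
        then show ?thesis using H by auto
      qed
      then obtain bt where rt: "rl F cr bt" and ineq: "t\<^sup>2 * z \<le> cr - F 0 cr * (t * x) - bt * (t * x)\<^sup>2 / 2"
        by blast
      have crc2: "cr < c2" using crlt cr_def by simp
      have mono: "b2 \<le> bt" using rl_mono[OF rt r2 crc2] .
      have disc: "(F 0 c2 - F 0 cr)\<^sup>2 \<le> 2 * (bt - b2) * (c2 - cr)" using rl_disc[OF rt r2] .
      have am: "\<bar>F 0 c2 - F 0 cr\<bar> * \<bar>t * x\<bar> \<le> (c2 - cr) + (bt - b2) * (t * x)\<^sup>2 / 2"
        using amgm[of "bt - b2" "c2 - cr" "F 0 c2 - F 0 cr" "t * x"] mono crc2 disc by (simp add: algebra_simps)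
      define Q where "Q = (t * x)\<^sup>2"
      define P where "P = F 0 c2 - F 0 cr"
      define A where "A = \<bar>t * x\<bar>"
      have am': "\<bar>P\<bar> * A \<le> (c2 - cr) + bt * Q / 2 - b2 * Q / 2"
      proof -
        have "(bt - b2) * Q / 2 = bt * Q / 2 - b2 * Q / 2" by (simp add: left_diff_distrib diff_divide_distrib)
        then show ?thesis using am unfolding P_def A_def Q_def by linarith
      qed
      have b1: "- F 0 cr * (t * x) \<le> \<bar>F 0 cr\<bar> * A" unfolding A_def
        by (metis abs_ge_minus_self abs_mult mult_minus_left)
      have "\<bar>F 0 cr\<bar> \<le> \<bar>Y2\<bar> + \<bar>P\<bar>" unfolding Y2_def P_def by linarith
      then have b2': "\<bar>F 0 cr\<bar> * A \<le> \<bar>Y2\<bar> * A + \<bar>P\<bar> * A"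
        unfolding A_def by (metis abs_ge_zero distrib_right mult_right_mono)
      have ineq': "t\<^sup>2 * z \<le> cr - F 0 cr * (t * x) - bt * Q / 2" using ineq unfolding Q_def .
      have "t\<^sup>2 * z \<le> \<bar>Y2\<bar> * A + c2 - b2 * Q / 2"
        using ineq' b1 b2' am' by linarith
      moreover have "t\<^sup>2 * \<kappa> = b2 * Q / 2 + t\<^sup>2 * z"
        unfolding \<kappa>_def Q_def by (simp add: power_mult_distrib distrib_left)
      ultimately have "t\<^sup>2 * \<kappa> \<le> \<bar>Y2\<bar> * A + c2" by linarith
      also have "\<dots> \<le> t * (\<bar>Y2\<bar> * \<bar>x\<bar> + \<bar>c2\<bar>)"
      proof -
        have "c2 \<le> t * \<bar>c2\<bar>"
        proof -
          have "\<bar>c2\<bar> \<le> t * \<bar>c2\<bar>" using t1 by (simp add: mult_le_cancel_right1)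
          then show ?thesis by linarith
        qed
        moreover have "\<bar>Y2\<bar> * A = t * (\<bar>Y2\<bar> * \<bar>x\<bar>)" unfolding A_def using t1 by (simp add: abs_mult)
        ultimately show ?thesis by (simp only: distrib_left)
      qed
      finally have "t * \<kappa> \<le> \<bar>Y2\<bar> * \<bar>x\<bar> + \<bar>c2\<bar>" using t1 by (simp add: power2_eq_square)
      moreover have "t * \<kappa> > \<bar>Y2\<bar> * \<bar>x\<bar> + \<bar>c2\<bar>" using t3 kp by (simp add: field_simps)
      ultimately show False by simp
    qed
  qed
qed

lemma small_sq:
  fixes s e k a :: real
  assumes "0 \<le> s" "s\<^sup>2 \<le> e + k * s" "e \<le> a\<^sup>2" "k \<le> a" "0 < a"
  shows "s \<le> 2 * a"
proof (rule ccontr)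
  assume "\<not> s \<le> 2 * a"
  then have sa: "a < s / 2" by simp
  have "k * s \<le> a * s" using assms by (simp add: mult_right_mono)
  moreover have "a * s < (s / 2) * s" using sa assms by (intro mult_strict_right_mono) auto
  moreover have "a\<^sup>2 < (s / 2)\<^sup>2" using sa assms by (intro power_strict_mono) auto
  ultimately have "s\<^sup>2 < (s / 2)\<^sup>2 + (s / 2) * s" using assms by linarith
  then show False by (simp add: power2_eq_square field_simps)
qed

lemma sq_sum_le: "((p::real) + q)\<^sup>2 \<le> 2 * p\<^sup>2 + 2 * q\<^sup>2"
proof -
  have "0 \<le> (p - q)\<^sup>2" by simp
  then show ?thesis by (simp add: power2_eq_square algebra_simps)
qed

lemma reach_scaled:
  assumes rF: "rulF F" and tp: "t > 0"
  obtains c b where "rl F c b" "t\<^sup>2 * z = c - F 0 c * (t * x) - b * (t * x)\<^sup>2 / 2"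
    "z = c / t\<^sup>2 - (F 0 c / t) * x - b * x\<^sup>2 / 2" "F (t * x) (t\<^sup>2 * z) / t = F 0 c / t + b * x"
proof -
  obtain c b where r: "rl F c b" and e1: "t\<^sup>2 * z = c - F 0 c * (t * x) - b * (t * x)\<^sup>2 / 2"
    and e2: "F (t * x) (t\<^sup>2 * z) = F 0 c + b * (t * x)"
    using reach[OF rF, of "t\<^sup>2 * z" "t * x"] by blast
  have "z = (t\<^sup>2 * z) / t\<^sup>2" using tp by simp
  also have "\<dots> = c / t\<^sup>2 - (F 0 c / t) * x - b * x\<^sup>2 / 2"
    unfolding e1 using tp by (simp add: power2_eq_square field_simps)
  finally have e3: "z = c / t\<^sup>2 - (F 0 c / t) * x - b * x\<^sup>2 / 2" .
  have e4: "F (t * x) (t\<^sup>2 * z) / t = F 0 c / t + b * x"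
    unfolding e2 using tp by (simp add: field_simps)
  show ?thesis using that r e1 e3 e4 by blast
qed

lemma Mlim:
  assumes rF: "rulF F" and x0: "x \<noteq> 0" and b2: "b2 \<in> Sl F" "b2 > - 2 * z / x\<^sup>2"
    and b1: "b1 \<in> Sl F" "b1 < - 2 * z / x\<^sup>2"
  shows "((\<lambda>t. F (t * x) (t\<^sup>2 * z) / t) \<longlongrightarrow> - 2 * z / x) at_top"
proof -
  have xx: "x\<^sup>2 > 0" using x0 by simp
  have k2: "b2 * x\<^sup>2 / 2 + z > 0"
  proof -
    have "b2 * x\<^sup>2 > - 2 * z" using b2(2) xx by (simp add: field_simps)
    then show ?thesis by simp
  qed
  have k1: "(- b1) * x\<^sup>2 / 2 + (- z) > 0"
  proof -
    have "b1 * x\<^sup>2 < - 2 * z" using b1(2) xx by (simp add: field_simps)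
    then show ?thesis by simp
  qed
  have b1m: "- b1 \<in> Sl (Fm F)" using b1(1) by (simp add: Sl_Fm)
  obtain b0 where r0: "rl F 0 b0" using rl_exists[OF rF] by blast
  define y0 where "y0 = F 0 0"
  show ?thesis unfolding tendsto_iff dist_real_def
  proof (intro allI impI)
    fix \<epsilon> :: real assume ep: "\<epsilon> > 0"
    define a where "a = \<epsilon> / 4"
    have ap: "a > 0" using ep by (simp add: a_def)
    define Kz where "Kz = 8 * (1 + \<bar>z\<bar>) / x\<^sup>2 + 4 * \<bar>b0\<bar> + 1"
    have Kzp: "Kz > 0" unfolding Kz_def using xx by (simp add: add_nonneg_pos)
    define \<delta> where "\<delta> = min 1 (min (a * \<bar>x\<bar> / 8) (a\<^sup>2 / (2 * Kz)))"
    have dp: "\<delta> > 0" unfolding \<delta>_def using ap x0 Kzp by simp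
    have d1: "\<delta> \<le> 1" and d2: "\<delta> \<le> a * \<bar>x\<bar> / 8" and d3: "\<delta> \<le> a\<^sup>2 / (2 * Kz)"
      unfolding \<delta>_def by auto
    note ev1 = M1[OF rF b2(1) k2 dp]
    note ev2 = M1[OF rulF_Fm[OF rF] b1m k1 dp]
    have ev3: "eventually (\<lambda>t. t \<ge> max 1 (2 * \<bar>y0\<bar> / a + 1)) at_top" by (rule eventually_ge_at_top)
    show "eventually (\<lambda>t. \<bar>F (t * x) (t\<^sup>2 * z) / t - - 2 * z / x\<bar> < \<epsilon>) at_top"
      using ev1 ev2 ev3
    proof eventually_elim
      case (elim t)
      have t1: "t \<ge> 1" and t2: "t \<ge> 2 * \<bar>y0\<bar> / a + 1" using elim(3) by auto
      have tp: "t > 0" using t1 by simp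
      obtain c b where r: "rl F c b" and e1: "t\<^sup>2 * z = c - F 0 c * (t * x) - b * (t * x)\<^sup>2 / 2"
        and e3: "z = c / t\<^sup>2 - (F 0 c / t) * x - b * x\<^sup>2 / 2"
        and e4: "F (t * x) (t\<^sup>2 * z) / t = F 0 c / t + b * x"
        using reach_scaled[OF rF tp] by blast
      have cl: "c > - \<delta> * t\<^sup>2" using elim(1) r e1 by blast
      have "rl (Fm F) (- c) (- b)" using r by (simp add: rl_Fm)
      moreover have "t\<^sup>2 * (- z) = (- c) - Fm F 0 (- c) * (t * x) - (- b) * (t * x)\<^sup>2 / 2"
        using e1 by (simp add: Fm_def algebra_simps)
      ultimately have "- c > - \<delta> * t\<^sup>2" using elim(2) by blast
      define \<gamma> where "\<gamma> = c / t\<^sup>2"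
      define \<phi> where "\<phi> = F 0 c / t"
      have t2p: "t\<^sup>2 > 0" using tp by simp
      have ga: "\<bar>\<gamma>\<bar> < \<delta>"
      proof -
        have "- \<delta> * t\<^sup>2 < c" "c < \<delta> * t\<^sup>2" using cl \<open>- c > - \<delta> * t\<^sup>2\<close> by auto
        then have "- \<delta> < \<gamma>" "\<gamma> < \<delta>" unfolding \<gamma>_def using t2p by (simp_all add: field_simps)
        then show ?thesis by simp
      qed
      have zq: "z = \<gamma> - \<phi> * x - b * x\<^sup>2 / 2" using e3 unfolding \<gamma>_def \<phi>_def .
      have bx2: "b * x\<^sup>2 = 2 * (\<gamma> - \<phi> * x - z)" using zq by simp
      have bx: "b * x = 2 * (\<gamma> - \<phi> * x - z) / x" using bx2 x0 by (simp add: power2_eq_square field_simps)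
      have res: "F (t * x) (t\<^sup>2 * z) / t - - 2 * z / x = 2 * \<gamma> / x - \<phi>"
        unfolding e4 \<phi>_def[symmetric] bx using x0 by (simp add: field_simps)
      have disc: "(F 0 0 - F 0 c)\<^sup>2 \<le> 2 * (b - b0) * (0 - c)" using rl_disc[OF r r0] .
      have disc2: "(y0 / t - \<phi>)\<^sup>2 \<le> - 2 * (b - b0) * \<gamma>"
      proof -
        have "(y0 / t - \<phi>)\<^sup>2 = (F 0 0 - F 0 c)\<^sup>2 / t\<^sup>2"
          unfolding y0_def \<phi>_def using tp by (simp add: power2_eq_square field_simps)
        also have "\<dots> \<le> 2 * (b - b0) * (0 - c) / t\<^sup>2" using disc t2p by (intro divide_right_mono) auto
        also have "\<dots> = - 2 * (b - b0) * \<gamma>" unfolding \<gamma>_def by (simp add: field_simps)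
        finally show ?thesis .
      qed
      have rhs: "- 2 * (b - b0) * \<gamma> \<le> 4 * \<bar>\<gamma>\<bar> * (\<bar>\<gamma>\<bar> + \<bar>z\<bar>) / x\<^sup>2 + 2 * \<bar>b0\<bar> * \<bar>\<gamma>\<bar> + 4 * \<bar>\<gamma>\<bar> / \<bar>x\<bar> * \<bar>\<phi>\<bar>"
      proof -
        have "- 2 * (b - b0) * \<gamma> = - 4 * \<gamma> * (\<gamma> - z) / x\<^sup>2 + 2 * b0 * \<gamma> + 4 * \<gamma> / x * \<phi>"
        proof -
          have "- 2 * b * \<gamma> = - 2 * \<gamma> * (b * x\<^sup>2) / x\<^sup>2" using xx by (simp add: field_simps)
          also have "\<dots> = - 2 * \<gamma> * (2 * (\<gamma> - \<phi> * x - z)) / x\<^sup>2" by (simp only: bx2)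
          also have "\<dots> = - 4 * \<gamma> * (\<gamma> - z) / x\<^sup>2 + 4 * \<gamma> / x * \<phi>"
            using x0 by (simp add: field_simps power2_eq_square)
          finally have "- 2 * b * \<gamma> = - 4 * \<gamma> * (\<gamma> - z) / x\<^sup>2 + 4 * \<gamma> / x * \<phi>" .
          moreover have "- 2 * (b - b0) * \<gamma> = - 2 * b * \<gamma> + 2 * b0 * \<gamma>" by (simp add: algebra_simps)
          ultimately show ?thesis by linarith
        qed
        moreover have "- 4 * \<gamma> * (\<gamma> - z) / x\<^sup>2 \<le> 4 * \<bar>\<gamma>\<bar> * (\<bar>\<gamma>\<bar> + \<bar>z\<bar>) / x\<^sup>2"
        proof -
          have "- 4 * \<gamma> * (\<gamma> - z) \<le> 4 * \<bar>\<gamma>\<bar> * (\<bar>\<gamma>\<bar> + \<bar>z\<bar>)"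
          proof -
            have "- 4 * \<gamma> * (\<gamma> - z) \<le> \<bar>4 * \<gamma> * (\<gamma> - z)\<bar>" by linarith
            also have "\<dots> = 4 * \<bar>\<gamma>\<bar> * \<bar>\<gamma> - z\<bar>" by (simp add: abs_mult)
            also have "\<dots> \<le> 4 * \<bar>\<gamma>\<bar> * (\<bar>\<gamma>\<bar> + \<bar>z\<bar>)" by (intro mult_left_mono) auto
            finally show ?thesis .
          qed
          then show ?thesis by (rule divide_right_mono) (use xx in simp)
        qed
        moreover have "2 * b0 * \<gamma> \<le> 2 * \<bar>b0\<bar> * \<bar>\<gamma>\<bar>"
        proof -
          have "2 * b0 * \<gamma> \<le> \<bar>2 * b0 * \<gamma>\<bar>" by linarith
          then show ?thesis by (simp add: abs_mult)
        qed
        moreover have "4 * \<gamma> / x * \<phi> \<le> 4 * \<bar>\<gamma>\<bar> / \<bar>x\<bar> * \<bar>\<phi>\<bar>"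
        proof -
          have "4 * \<gamma> / x * \<phi> \<le> \<bar>4 * \<gamma> / x * \<phi>\<bar>" by linarith
          also have "\<dots> = 4 * \<bar>\<gamma>\<bar> / \<bar>x\<bar> * \<bar>\<phi>\<bar>" by (simp add: abs_mult)
          finally show ?thesis .
        qed
        ultimately show ?thesis by linarith
      qed
      define R1 where "R1 = \<bar>\<gamma>\<bar> * (\<bar>\<gamma>\<bar> + \<bar>z\<bar>) / x\<^sup>2"
      define R2 where "R2 = \<bar>b0\<bar> * \<bar>\<gamma>\<bar>"
      define R3 where "R3 = \<bar>\<gamma>\<bar> / \<bar>x\<bar> * \<bar>\<phi>\<bar>"
      have rhs': "- 2 * (b - b0) * \<gamma> \<le> 4 * R1 + 2 * R2 + 4 * R3"
      proof -
        have "4 * \<bar>\<gamma>\<bar> * (\<bar>\<gamma>\<bar> + \<bar>z\<bar>) / x\<^sup>2 = 4 * R1" unfolding R1_def by simp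
        moreover have "2 * \<bar>b0\<bar> * \<bar>\<gamma>\<bar> = 2 * R2" unfolding R2_def by simp
        moreover have "4 * \<bar>\<gamma>\<bar> / \<bar>x\<bar> * \<bar>\<phi>\<bar> = 4 * R3" unfolding R3_def by simp
        ultimately show ?thesis using rhs by linarith
      qed
      have phi2: "\<phi>\<^sup>2 \<le> (8 * R1 + 4 * R2 + 2 * (y0 / t)\<^sup>2) + (8 * \<bar>\<gamma>\<bar> / \<bar>x\<bar>) * \<bar>\<phi>\<bar>"
      proof -
        have "\<phi>\<^sup>2 = ((\<phi> - y0 / t) + y0 / t)\<^sup>2" by simp
        also have "\<dots> \<le> 2 * (\<phi> - y0 / t)\<^sup>2 + 2 * (y0 / t)\<^sup>2" by (rule sq_sum_le)
        also have "(\<phi> - y0 / t)\<^sup>2 = (y0 / t - \<phi>)\<^sup>2" by (simp add: power2_commute)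
        finally have "\<phi>\<^sup>2 \<le> 2 * (y0 / t - \<phi>)\<^sup>2 + 2 * (y0 / t)\<^sup>2" .
        moreover have "(8 * \<bar>\<gamma>\<bar> / \<bar>x\<bar>) * \<bar>\<phi>\<bar> = 8 * R3" unfolding R3_def by simp
        ultimately show ?thesis using disc2 rhs' by linarith
      qed
      have eb: "8 * R1 + 4 * R2 + 2 * (y0 / t)\<^sup>2 \<le> a\<^sup>2"
      proof -
        have g1: "\<bar>\<gamma>\<bar> \<le> 1" using ga d1 by simp
        have "8 * \<bar>\<gamma>\<bar> * (\<bar>\<gamma>\<bar> + \<bar>z\<bar>) / x\<^sup>2 \<le> \<bar>\<gamma>\<bar> * (8 * (1 + \<bar>z\<bar>) / x\<^sup>2)"
        proof -
          have "\<bar>\<gamma>\<bar> * (\<bar>\<gamma>\<bar> + \<bar>z\<bar>) \<le> \<bar>\<gamma>\<bar> * (1 + \<bar>z\<bar>)" using g1 by (intro mult_left_mono) auto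
          then have i1: "8 * (\<bar>\<gamma>\<bar> * (\<bar>\<gamma>\<bar> + \<bar>z\<bar>)) / x\<^sup>2 \<le> 8 * (\<bar>\<gamma>\<bar> * (1 + \<bar>z\<bar>)) / x\<^sup>2"
            using xx by (intro divide_right_mono) auto
          have "8 * \<bar>\<gamma>\<bar> * (\<bar>\<gamma>\<bar> + \<bar>z\<bar>) / x\<^sup>2 = 8 * (\<bar>\<gamma>\<bar> * (\<bar>\<gamma>\<bar> + \<bar>z\<bar>)) / x\<^sup>2"
            by (simp add: mult.assoc)
          also have "\<dots> \<le> 8 * (\<bar>\<gamma>\<bar> * (1 + \<bar>z\<bar>)) / x\<^sup>2" by (rule i1)
          also have "\<dots> = \<bar>\<gamma>\<bar> * (8 * (1 + \<bar>z\<bar>) / x\<^sup>2)"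
            by (simp add: field_simps)
          finally show ?thesis .
        qed
        moreover have "\<bar>\<gamma>\<bar> * Kz = \<bar>\<gamma>\<bar> * (8 * (1 + \<bar>z\<bar>) / x\<^sup>2) + 4 * \<bar>b0\<bar> * \<bar>\<gamma>\<bar> + \<bar>\<gamma>\<bar>"
          unfolding Kz_def by (simp add: distrib_left)
        ultimately have "8 * \<bar>\<gamma>\<bar> * (\<bar>\<gamma>\<bar> + \<bar>z\<bar>) / x\<^sup>2 + 4 * \<bar>b0\<bar> * \<bar>\<gamma>\<bar> \<le> \<bar>\<gamma>\<bar> * Kz"
          by linarith
        also have "\<dots> \<le> \<delta> * Kz" using ga Kzp by (simp add: mult_right_mono)
        also have "\<dots> \<le> a\<^sup>2 / 2" using d3 Kzp by (simp add: field_simps)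
        finally have A1: "8 * \<bar>\<gamma>\<bar> * (\<bar>\<gamma>\<bar> + \<bar>z\<bar>) / x\<^sup>2 + 4 * \<bar>b0\<bar> * \<bar>\<gamma>\<bar> \<le> a\<^sup>2 / 2" .
        have "\<bar>y0\<bar> / t \<le> a / 2"
        proof -
          have "2 * \<bar>y0\<bar> / a \<le> t" using t2 by simp
          then have "2 * \<bar>y0\<bar> \<le> a * t" using ap by (simp add: field_simps)
          then show ?thesis using tp by (simp add: field_simps)
        qed
        then have "(\<bar>y0\<bar> / t)\<^sup>2 \<le> (a / 2)\<^sup>2" using tp by (intro power_mono) auto
        then have "2 * (y0 / t)\<^sup>2 \<le> a\<^sup>2 / 2" by (simp add: power_divide power2_eq_square mult_ac)
        moreover have "8 * \<bar>\<gamma>\<bar> * (\<bar>\<gamma>\<bar> + \<bar>z\<bar>) / x\<^sup>2 = 8 * R1" unfolding R1_def by simp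
        moreover have "4 * \<bar>b0\<bar> * \<bar>\<gamma>\<bar> = 4 * R2" unfolding R2_def by simp
        ultimately show ?thesis using A1 by linarith
      qed
      have kb: "8 * \<bar>\<gamma>\<bar> / \<bar>x\<bar> \<le> a"
      proof -
        have "8 * \<bar>\<gamma>\<bar> \<le> a * \<bar>x\<bar>" using ga d2 by simp
        then show ?thesis using x0 by (simp add: field_simps)
      qed
      have phib: "\<bar>\<phi>\<bar> \<le> 2 * a"
        using small_sq[of "\<bar>\<phi>\<bar>", OF _ _ eb kb ap] phi2 by simp
      have "\<bar>2 * \<gamma> / x - \<phi>\<bar> \<le> 2 * \<bar>\<gamma>\<bar> / \<bar>x\<bar> + \<bar>\<phi>\<bar>" by (simp add: abs_mult abs_triangle_ineq4[THEN order_trans])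
      moreover have "2 * \<bar>\<gamma>\<bar> / \<bar>x\<bar> \<le> a / 4"
      proof -
        have "8 * \<bar>\<gamma>\<bar> \<le> a * \<bar>x\<bar>" using ga d2 by simp
        then show ?thesis using x0 by (simp add: field_simps)
      qed
      ultimately show ?case unfolding res using phib ap a_def by linarith
    qed
  qed
qed

lemma L1:
  assumes rF: "rulF F" and ub: "\<forall>b\<in>Sl F. b \<le> \<beta>" and zL: "z < - \<beta> * x\<^sup>2 / 2"
  shows "eventually (\<lambda>t. \<forall>c b. rl F c b \<and> t\<^sup>2 * z = c - F 0 c * (t * x) - b * (t * x)\<^sup>2 / 2
            \<longrightarrow> c < C) at_top"
proof -
  define m where "m = - z - \<beta> * x\<^sup>2 / 2"
  have mp: "m > 0" using zL by (simp add: m_def)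
  obtain br where br: "rl F C br" using rl_exists[OF rF] by blast
  define YC where "YC = F 0 C"
  define T where "T = max 1 ((\<bar>YC\<bar> * \<bar>x\<bar> + \<bar>C\<bar>) / m + 1)"
  show ?thesis
  proof (rule eventually_mono[OF eventually_ge_at_top[of T]], intro allI impI)
    fix t c b
    assume tT: "T \<le> t" and H: "rl F c b \<and> t\<^sup>2 * z = c - F 0 c * (t * x) - b * (t * x)\<^sup>2 / 2"
    have t1: "t \<ge> 1" using tT unfolding T_def by linarith
    have t3: "t > (\<bar>YC\<bar> * \<bar>x\<bar> + \<bar>C\<bar>) / m" using tT unfolding T_def by linarith
    show "c < C"
    proof (rule ccontr)
      assume "\<not> c < C"
      then have cge: "C \<le> c" by simp
      have "\<exists>bt. bt \<in> Sl F \<and> C - F 0 C * (t * x) - bt * (t * x)\<^sup>2 / 2 \<le> t\<^sup>2 * z"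
      proof (cases "C < c")
        case True
        have "C - F 0 C * (t * x) - br * (t * x)\<^sup>2 / 2 \<le> c - F 0 c * (t * x) - b * (t * x)\<^sup>2 / 2"
          using noncross[OF br _ True] H by blast
        then show ?thesis using H br unfolding Sl_def by auto
      next
        case False
        then have "c = C" using cge by simp
        then show ?thesis using H unfolding Sl_def by auto
      qed
      then obtain bt where bt: "bt \<in> Sl F" and ineq: "C - F 0 C * (t * x) - bt * (t * x)\<^sup>2 / 2 \<le> t\<^sup>2 * z"
        by blast
      define Q where "Q = (t * x)\<^sup>2"
      have Q: "Q = t\<^sup>2 * x\<^sup>2" unfolding Q_def by (simp add: power_mult_distrib)
      have "bt * Q \<le> \<beta> * Q" using ub bt unfolding Q_def by (simp add: mult_right_mono)
      then have i2: "C - YC * (t * x) - \<beta> * Q / 2 \<le> t\<^sup>2 * z" using ineq unfolding YC_def Q_def by linarith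
      have tz: "t\<^sup>2 * z = - t\<^sup>2 * m - \<beta> * Q / 2" unfolding Q m_def by (simp add: algebra_simps)
      have "t\<^sup>2 * m \<le> YC * (t * x) - C" using i2 tz by linarith
      also have "\<dots> \<le> t * (\<bar>YC\<bar> * \<bar>x\<bar> + \<bar>C\<bar>)"
      proof -
        have "YC * (t * x) \<le> \<bar>YC * (t * x)\<bar>" by linarith
        also have "\<dots> = t * (\<bar>YC\<bar> * \<bar>x\<bar>)" using t1 by (simp add: abs_mult)
        finally have A: "YC * (t * x) \<le> t * (\<bar>YC\<bar> * \<bar>x\<bar>)" .
        have "\<bar>C\<bar> \<le> t * \<bar>C\<bar>" using t1 by (simp add: mult_le_cancel_right1)
        then have B: "- C \<le> t * \<bar>C\<bar>" by linarith
        from A B show ?thesis by (simp add: distrib_left)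
      qed
      finally have "t * m \<le> \<bar>YC\<bar> * \<bar>x\<bar> + \<bar>C\<bar>" using t1 by (simp add: power2_eq_square)
      moreover have "t * m > \<bar>YC\<bar> * \<bar>x\<bar> + \<bar>C\<bar>" using t3 mp by (simp add: field_simps)
      ultimately show False by simp
    qed
  qed
qed

lemma Llim:
  assumes rF: "rulF F" and ub: "\<forall>b\<in>Sl F. b \<le> \<beta>" and sup: "\<forall>e>0. \<exists>b\<in>Sl F. b > \<beta> - e"
    and zL: "z < - \<beta> * x\<^sup>2 / 2"
  shows "((\<lambda>t. F (t * x) (t\<^sup>2 * z) / t) \<longlongrightarrow> \<beta> * x) at_top"
  unfolding tendsto_iff dist_real_def
proof (intro allI impI)
  fix \<epsilon> :: real assume ep: "\<epsilon> > 0"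
  define K where "K = 2 + 2 * \<bar>z\<bar> + x\<^sup>2 * (3 + \<bar>\<beta>\<bar>)"
  have Kp: "K > 0" unfolding K_def by (simp add: add_pos_nonneg)
  define e' where "e' = min 1 (min (\<epsilon> / (4 * (\<bar>x\<bar> + 1))) (\<epsilon>\<^sup>2 / (32 * K)))"
  have e'p: "e' > 0" unfolding e'_def using ep Kp by (simp add: add_nonneg_pos)
  have e'1: "e' \<le> 1" and e'2: "e' \<le> \<epsilon> / (4 * (\<bar>x\<bar> + 1))" and e'3: "e' \<le> \<epsilon>\<^sup>2 / (32 * K)"
    unfolding e'_def by auto
  obtain b' where b'S: "b' \<in> Sl F" and b'g: "b' > \<beta> - e'" using sup e'p by blast
  obtain c' where r': "rl F c' b'" using b'S unfolding Sl_def by blast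
  define Y' where "Y' = F 0 c'"
  define T where "T = max 1 (max (2 * \<bar>c'\<bar> + 2 * \<bar>Y'\<bar> * \<bar>x\<bar> + 1) (4 * \<bar>Y'\<bar> / \<epsilon> + 1))"
  note ev1 = L1[OF rF ub zL, of c']
  note ev2 = eventually_ge_at_top[of T]
  show "eventually (\<lambda>t. \<bar>F (t * x) (t\<^sup>2 * z) / t - \<beta> * x\<bar> < \<epsilon>) at_top"
    using ev1 ev2
  proof eventually_elim
    case (elim t)
    have t1: "t \<ge> 1" and t2: "t \<ge> 2 * \<bar>c'\<bar> + 2 * \<bar>Y'\<bar> * \<bar>x\<bar> + 1" and t3: "t \<ge> 4 * \<bar>Y'\<bar> / \<epsilon> + 1"
      using elim(2) unfolding T_def by auto
    have tp: "t > 0" using t1 by simp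
    obtain c b where r: "rl F c b" and e1: "t\<^sup>2 * z = c - F 0 c * (t * x) - b * (t * x)\<^sup>2 / 2"
      and e3: "z = c / t\<^sup>2 - (F 0 c / t) * x - b * x\<^sup>2 / 2"
      and e4: "F (t * x) (t\<^sup>2 * z) / t = F 0 c / t + b * x"
      using reach_scaled[OF rF tp] by blast
    have cc': "c < c'" using elim(1) r e1 by blast
    have bb': "b' \<le> b" using rl_mono[OF r r' cc'] .
    have bb: "b \<le> \<beta>" using ub r unfolding Sl_def by blast
    define X where "X = t * x"
    define Q where "Q = X\<^sup>2"
    have Q: "Q = t\<^sup>2 * x\<^sup>2" unfolding Q_def X_def by (simp add: power_mult_distrib)
    have Qn: "Q \<ge> 0" unfolding Q_def by simp
    define Y where "Y = F 0 c"
    define P where "P = Y - Y'"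
    define d where "d = c' - c"
    have dp: "d > 0" using cc' by (simp add: d_def)
    have disc0: "(F 0 c' - F 0 c)\<^sup>2 \<le> 2 * (b - b') * (c' - c)" using rl_disc[OF r r'] .
    have P2: "P\<^sup>2 \<le> 2 * e' * d"
    proof -
      have "P\<^sup>2 = (F 0 c' - F 0 c)\<^sup>2" unfolding P_def Y_def Y'_def by (simp add: power2_commute)
      also have "\<dots> \<le> 2 * (b - b') * d" using disc0 unfolding d_def .
      also have "\<dots> \<le> 2 * e' * d" using bb b'g dp by (intro mult_right_mono) auto
      finally show ?thesis .
    qed
    have am: "\<bar>P\<bar> * \<bar>X\<bar> \<le> d / 2 + (2 * e') * X\<^sup>2 / 2"
      using amgm[of "2 * e'" "d / 2" P X] e'p dp P2 by (simp add: mult.commute mult.left_commute)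
    have am': "\<bar>P\<bar> * \<bar>X\<bar> \<le> d / 2 + e' * Q" using am unfolding Q_def by simp
    have yx: "- Y * X \<le> \<bar>Y'\<bar> * \<bar>X\<bar> + \<bar>P\<bar> * \<bar>X\<bar>"
    proof -
      have "- Y * X \<le> \<bar>Y\<bar> * \<bar>X\<bar>" by (metis abs_ge_minus_self abs_mult mult_minus_left)
      moreover have "\<bar>Y\<bar> \<le> \<bar>Y'\<bar> + \<bar>P\<bar>" unfolding P_def by linarith
      then have "\<bar>Y\<bar> * \<bar>X\<bar> \<le> (\<bar>Y'\<bar> + \<bar>P\<bar>) * \<bar>X\<bar>" by (intro mult_right_mono) auto
      ultimately show ?thesis by (simp add: distrib_right)
    qed
    have cexp: "c = t\<^sup>2 * z + Y * X + b * Q / 2" using e1 unfolding Y_def X_def Q_def by simp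
    have bQ: "- b * Q / 2 \<le> (1 + \<bar>\<beta>\<bar>) * Q / 2"
    proof -
      have "- b \<le> 1 + \<bar>\<beta>\<bar>" using bb' b'g e'1 by linarith
      then have "- b * Q \<le> (1 + \<bar>\<beta>\<bar>) * Q" using Qn by (intro mult_right_mono) auto
      then show ?thesis by simp
    qed
    have eQ: "e' * Q \<le> Q" using mult_right_mono[OF e'1 Qn] by simp
    have cy: "c' + \<bar>Y'\<bar> * \<bar>X\<bar> \<le> t\<^sup>2"
    proof -
      have nn: "0 \<le> \<bar>Y'\<bar> * \<bar>x\<bar>" by simp
      have "\<bar>c'\<bar> \<le> t / 2" using t2 nn by linarith
      also have "t / 2 \<le> t\<^sup>2 / 2" using t1 by (simp add: power2_eq_square)
      finally have A: "c' \<le> t\<^sup>2 / 2" by linarith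
      have "\<bar>Y'\<bar> * \<bar>x\<bar> \<le> t / 2" using t2 by linarith
      then have "t * (\<bar>Y'\<bar> * \<bar>x\<bar>) \<le> t * (t / 2)" using tp by (intro mult_left_mono) auto
      moreover have "\<bar>Y'\<bar> * \<bar>X\<bar> = t * (\<bar>Y'\<bar> * \<bar>x\<bar>)" unfolding X_def using tp by (simp add: abs_mult)
      moreover have "t * (t / 2) = t\<^sup>2 / 2" by (simp add: power2_eq_square)
      ultimately have B: "\<bar>Y'\<bar> * \<bar>X\<bar> \<le> t\<^sup>2 / 2" by linarith
      from A B show ?thesis by linarith
    qed
    have tz: "- (t\<^sup>2 * z) \<le> t\<^sup>2 * \<bar>z\<bar>"
    proof -
      have "- (t\<^sup>2 * z) \<le> \<bar>t\<^sup>2 * z\<bar>" by linarith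
      then show ?thesis by (simp add: abs_mult)
    qed
    have "d \<le> c' - t\<^sup>2 * z + \<bar>Y'\<bar> * \<bar>X\<bar> + d / 2 + e' * Q - b * Q / 2"
      using cexp yx am' unfolding d_def by linarith
    then have "d / 2 \<le> t\<^sup>2 + t\<^sup>2 * \<bar>z\<bar> + Q + (1 + \<bar>\<beta>\<bar>) * Q / 2"
      using cy tz bQ eQ by linarith
    also have "\<dots> = t\<^sup>2 * (K / 2)" unfolding Q K_def by (simp add: algebra_simps add_divide_distrib)
    finally have dK: "d \<le> t\<^sup>2 * K" by simp
    have "2 * e' * d \<le> 2 * e' * (t\<^sup>2 * K)" using dK e'p by (intro mult_left_mono) auto
    with P2 have "P\<^sup>2 \<le> 2 * e' * (t\<^sup>2 * K)" by linarith
    also have "\<dots> = (2 * e' * K) * t\<^sup>2" by simp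
    also have "\<dots> \<le> (\<epsilon>\<^sup>2 / 16) * t\<^sup>2"
    proof -
      have "2 * e' * K \<le> 2 * (\<epsilon>\<^sup>2 / (32 * K)) * K" using e'3 Kp by (intro mult_right_mono) auto
      also have "\<dots> = \<epsilon>\<^sup>2 / 16" using Kp by (simp add: field_simps)
      finally show ?thesis by (intro mult_right_mono) auto
    qed
    also have "\<dots> = (\<epsilon> / 4 * t)\<^sup>2" by (simp add: power2_eq_square field_simps)
    finally have Psq: "P\<^sup>2 \<le> (\<epsilon> / 4 * t)\<^sup>2" .
    have "\<bar>P\<bar> \<le> \<epsilon> / 4 * t" using power2_le_imp_le[of "\<bar>P\<bar>" "\<epsilon> / 4 * t"] Psq ep tp by simp
    then have Pt: "\<bar>P\<bar> / t \<le> \<epsilon> / 4" using tp by (simp add: pos_divide_le_eq)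
    have Y't: "\<bar>Y'\<bar> / t \<le> \<epsilon> / 4"
    proof -
      have "4 * \<bar>Y'\<bar> / \<epsilon> \<le> t" using t3 by simp
      then have "4 * \<bar>Y'\<bar> \<le> \<epsilon> * t" using ep by (simp add: field_simps)
      then show ?thesis using tp by (simp add: field_simps)
    qed
    have bx: "\<bar>b * x - \<beta> * x\<bar> \<le> \<epsilon> / 4"
    proof -
      have "b * x - \<beta> * x = (b - \<beta>) * x" by (simp add: left_diff_distrib)
      then have "\<bar>b * x - \<beta> * x\<bar> = \<bar>b - \<beta>\<bar> * \<bar>x\<bar>" by (simp add: abs_mult)
      also have "\<bar>b - \<beta>\<bar> = \<beta> - b" using bb by simp
      finally have "\<bar>b * x - \<beta> * x\<bar> = (\<beta> - b) * \<bar>x\<bar>" .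
      also have "\<dots> \<le> e' * \<bar>x\<bar>" using bb' b'g by (intro mult_right_mono) auto
      also have "\<dots> \<le> (\<epsilon> / (4 * (\<bar>x\<bar> + 1))) * (\<bar>x\<bar> + 1)" using e'2 e'p by (intro mult_mono) auto
      also have "\<dots> = \<epsilon> / 4" by (simp add: field_simps)
      finally show ?thesis .
    qed
    have Yt: "\<bar>Y / t\<bar> \<le> \<bar>Y'\<bar> / t + \<bar>P\<bar> / t"
    proof -
      have "\<bar>Y\<bar> \<le> \<bar>Y'\<bar> + \<bar>P\<bar>" unfolding P_def by linarith
      then show ?thesis using tp by (simp add: field_simps)
    qed
    have "F (t * x) (t\<^sup>2 * z) / t - \<beta> * x = Y / t + (b * x - \<beta> * x)" unfolding e4 Y_def by simp
    moreover have "\<bar>Y / t + (b * x - \<beta> * x)\<bar> \<le> \<bar>Y / t\<bar> + \<bar>b * x - \<beta> * x\<bar>" by (rule abs_triangle_ineq)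
    ultimately show ?case using Yt Pt Y't bx ep by linarith
  qed
qed

lemma Ulim:
  assumes rF: "rulF F" and lb: "\<forall>b\<in>Sl F. \<beta> \<le> b" and inf: "\<forall>e>0. \<exists>b\<in>Sl F. b < \<beta> + e"
    and zU: "z > - \<beta> * x\<^sup>2 / 2"
  shows "((\<lambda>t. F (t * x) (t\<^sup>2 * z) / t) \<longlongrightarrow> \<beta> * x) at_top"
proof -
  have ub: "\<forall>b\<in>Sl (Fm F). b \<le> - \<beta>"
  proof
    fix b assume "b \<in> Sl (Fm F)"
    then have "- b \<in> Sl F" by (simp add: Sl_Fm)
    then have "\<beta> \<le> - b" using lb by blast
    then show "b \<le> - \<beta>" by simp
  qed
  have sup: "\<forall>e>0. \<exists>b\<in>Sl (Fm F). b > - \<beta> - e"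
  proof (intro allI impI)
    fix e :: real assume "e > 0"
    then obtain b where "b \<in> Sl F" "b < \<beta> + e" using inf by blast
    then show "\<exists>b\<in>Sl (Fm F). b > - \<beta> - e" by (intro bexI[of _ "- b"]) (auto simp: Sl_Fm)
  qed
  have zL: "- z < - (- \<beta>) * x\<^sup>2 / 2" using zU by simp
  have "((\<lambda>t. Fm F (t * x) (t\<^sup>2 * (- z)) / t) \<longlongrightarrow> (- \<beta>) * x) at_top"
    by (rule Llim[OF rulF_Fm[OF rF] ub sup zL])
  then have "((\<lambda>t. - (Fm F (t * x) (t\<^sup>2 * (- z)) / t)) \<longlongrightarrow> - ((- \<beta>) * x)) at_top"
    by (rule tendsto_minus)
  moreover have "(\<lambda>t. - (Fm F (t * x) (t\<^sup>2 * (- z)) / t)) = (\<lambda>t. F (t * x) (t\<^sup>2 * z) / t)"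
    by (simp add: Fm_def)
  ultimately show ?thesis by simp
qed

definition abp :: "real set \<Rightarrow> real \<Rightarrow> real \<Rightarrow> bool" where
  "abp S x y = (if bdd_above S then y > Sup S * x else x < 0)"

definition abm :: "real set \<Rightarrow> real \<Rightarrow> real \<Rightarrow> bool" where
  "abm S x y = (if bdd_below S then y > Inf S * x else x > 0)"

definition Tst :: "real set \<Rightarrow> heis set" where
  "Tst S = {(x, y, w). (w < 0 \<and> abp S x y) \<or> (w > 0 \<and> abm S x y)}"

definition Nex :: "real set \<Rightarrow> heis set" where
  "Nex S = {(x, y, w). x = 0 \<or> w = 0
     \<or> (bdd_above S \<and> (y = Sup S * x \<or> w - x * y / 2 = - Sup S * x\<^sup>2 / 2))
     \<or> (bdd_below S \<and> (y = Inf S * x \<or> w - x * y / 2 = - Inf S * x\<^sup>2 / 2))}"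

lemma sign_lemma:
  fixes x y \<beta> :: real
  assumes "x * (y - \<beta> * x) > 0"
  shows "(x > 0 \<longrightarrow> y > \<beta> * x) \<and> (x < 0 \<longrightarrow> y < \<beta> * x)"
  using assms by (auto simp: zero_less_mult_iff)

lemma sign_lemma2:
  fixes x y \<beta> :: real
  assumes "x * (y - \<beta> * x) < 0"
  shows "(x > 0 \<longrightarrow> y < \<beta> * x) \<and> (x < 0 \<longrightarrow> y > \<beta> * x)"
  using assms by (auto simp: mult_less_0_iff)

lemma tendsto_side:
  assumes "(g \<longlongrightarrow> (L::real)) at_top" "y \<noteq> L"
  shows "eventually (\<lambda>t. y > g t \<longleftrightarrow> y > L) at_top"
proof (cases "y > L")
  case True
  then have "eventually (\<lambda>t. g t < y) at_top" using assms(1) by (simp add: order_tendstoD(2))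
  then show ?thesis by eventually_elim (use True in auto)
next
  case False
  then have "y < L" using assms(2) by simp
  then have "eventually (\<lambda>t. g t > y) at_top" using assms(1) by (simp add: order_tendstoD(1))
  then show ?thesis by eventually_elim (use False in auto)
qed

lemma pointwise_F:
  assumes rF: "rulF F" and p: "(x, y, w) \<notin> Nex (Sl F)"
  shows "eventually (\<lambda>t. y > F (t * x) (t\<^sup>2 * (w - x * y / 2)) / t \<longleftrightarrow> (x, y, w) \<in> Tst (Sl F)) at_top"
proof -
  define S where "S = Sl F"
  define z where "z = w - x * y / 2"
  have Sne: "S \<noteq> {}" unfolding S_def using Sl_nonempty[OF rF] .
  have x0: "x \<noteq> 0" and w0: "w \<noteq> 0" using p unfolding Nex_def by auto
  have xx: "x\<^sup>2 > 0" using x0 by simp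
  have nA: "bdd_above S \<Longrightarrow> y \<noteq> Sup S * x \<and> z \<noteq> - Sup S * x\<^sup>2 / 2"
    using p unfolding Nex_def S_def z_def by auto
  have nB: "bdd_below S \<Longrightarrow> y \<noteq> Inf S * x \<and> z \<noteq> - Inf S * x\<^sup>2 / 2"
    using p unfolding Nex_def S_def z_def by auto
  have T_iff: "(x, y, w) \<in> Tst S \<longleftrightarrow> (w < 0 \<and> abp S x y) \<or> (w > 0 \<and> abm S x y)"
    unfolding Tst_def by simp
  have IS: "bdd_above S \<Longrightarrow> bdd_below S \<Longrightarrow> Inf S \<le> Sup S"
    using Sne by (meson all_not_in_conv cInf_lower cSup_upper order_trans)
  have zrel: "z < - \<beta> * x\<^sup>2 / 2 \<longleftrightarrow> x * (y - \<beta> * x) > 2 * w" for \<beta>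
    unfolding z_def by (simp add: power2_eq_square algebra_simps)
  have zrel2: "z > - \<beta> * x\<^sup>2 / 2 \<longleftrightarrow> x * (y - \<beta> * x) < 2 * w" for \<beta>
    unfolding z_def by (simp add: power2_eq_square algebra_simps)
  have wlt: "z > - \<beta> * x\<^sup>2 / 2 \<longleftrightarrow> \<beta> > - 2 * z / x\<^sup>2" for \<beta>
  proof -
    have "- 2 * z / x\<^sup>2 < \<beta> \<longleftrightarrow> - 2 * z < \<beta> * x\<^sup>2" by (rule pos_divide_less_eq[OF xx])
    moreover have "z > - \<beta> * x\<^sup>2 / 2 \<longleftrightarrow> - 2 * z < \<beta> * x\<^sup>2" by auto
    ultimately show ?thesis by simp
  qed
  have wgt: "z < - \<beta> * x\<^sup>2 / 2 \<longleftrightarrow> \<beta> < - 2 * z / x\<^sup>2" for \<beta>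
  proof -
    have "\<beta> < - 2 * z / x\<^sup>2 \<longleftrightarrow> \<beta> * x\<^sup>2 < - 2 * z" by (rule pos_less_divide_eq[OF xx])
    moreover have "z < - \<beta> * x\<^sup>2 / 2 \<longleftrightarrow> \<beta> * x\<^sup>2 < - 2 * z" by auto
    ultimately show ?thesis by simp
  qed
  have main: "\<exists>L. ((\<lambda>t. F (t * x) (t\<^sup>2 * z) / t) \<longlongrightarrow> L) at_top \<and> y \<noteq> L \<and>
                 (y > L \<longleftrightarrow> (x, y, w) \<in> Tst S)"
  proof (cases "\<exists>b\<in>S. b > - 2 * z / x\<^sup>2")
    case A: True
    show ?thesis
    proof (cases "\<exists>b\<in>S. b < - 2 * z / x\<^sup>2")
      case B: True
      obtain b2 where b2: "b2 \<in> S" "b2 > - 2 * z / x\<^sup>2" using A by blast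
      obtain b1 where b1: "b1 \<in> S" "b1 < - 2 * z / x\<^sup>2" using B by blast
      have lim: "((\<lambda>t. F (t * x) (t\<^sup>2 * z) / t) \<longlongrightarrow> - 2 * z / x) at_top"
        using Mlim[OF rF x0, of b2 z b1] b1 b2 unfolding S_def by blast
      have Lq: "- 2 * z / x = y - 2 * w / x" unfolding z_def using x0 by (simp add: field_simps)
      have Lne: "y \<noteq> - 2 * z / x" unfolding Lq using w0 x0 by simp
      have yL: "y > - 2 * z / x \<longleftrightarrow> w / x > 0" unfolding Lq by (simp add: zero_less_divide_iff)
      have P1: "w < 0 \<Longrightarrow> abp S x y \<longleftrightarrow> x < 0"
      proof -
        assume wn: "w < 0"
        show "abp S x y \<longleftrightarrow> x < 0"
        proof (cases "bdd_above S")
          case True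
          have "Sup S \<ge> b2" using True b2 by (simp add: cSup_upper)
          then have "z > - Sup S * x\<^sup>2 / 2" using wlt b2 by (meson less_le_trans)
          then have "x * (y - Sup S * x) < 0" using zrel2 wn by fastforce
          from sign_lemma2[OF this] x0 show ?thesis unfolding abp_def using True by auto
        next
          case False then show ?thesis unfolding abp_def by simp
        qed
      qed
      have P2: "w > 0 \<Longrightarrow> abm S x y \<longleftrightarrow> x > 0"
      proof -
        assume wp: "w > 0"
        show "abm S x y \<longleftrightarrow> x > 0"
        proof (cases "bdd_below S")
          case True
          have "Inf S \<le> b1" using True b1 by (simp add: cInf_lower)
          then have "z < - Inf S * x\<^sup>2 / 2" using wgt b1 by (meson le_less_trans)
          then have "x * (y - Inf S * x) > 0" using zrel wp by fastforce
          from sign_lemma[OF this] x0 show ?thesis unfolding abm_def using True by auto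
        next
          case False then show ?thesis unfolding abm_def by simp
        qed
      qed
      have "y > - 2 * z / x \<longleftrightarrow> (x, y, w) \<in> Tst S"
        unfolding yL T_iff using P1 P2 w0 x0
        by (cases "w < 0"; cases "x < 0") (auto simp: zero_less_divide_iff)
      then show ?thesis using lim Lne by blast
    next
      case B: False
      have lbd: "\<forall>b\<in>S. - 2 * z / x\<^sup>2 \<le> b" using B by auto
      then have bb: "bdd_below S" by (auto simp: bdd_below_def)
      have "- 2 * z / x\<^sup>2 \<le> Inf S" using lbd Sne by (simp add: cInf_greatest)
      moreover have "z \<noteq> - Inf S * x\<^sup>2 / 2" using nB bb by blast
      ultimately have "- 2 * z / x\<^sup>2 < Inf S"
        using xx by (cases "- 2 * z / x\<^sup>2 = Inf S") (auto simp: field_simps)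
      then have zU: "z > - Inf S * x\<^sup>2 / 2" using wlt by blast
      have lim: "((\<lambda>t. F (t * x) (t\<^sup>2 * z) / t) \<longlongrightarrow> Inf S * x) at_top"
      proof (rule Ulim[OF rF _ _ zU])
        show "\<forall>b\<in>Sl F. Inf S \<le> b" using bb unfolding S_def by (simp add: cInf_lower)
        show "\<forall>e>0. \<exists>b\<in>Sl F. b < Inf S + e" using bb Sne unfolding S_def
          by (metis add.commute cInf_less_iff less_add_same_cancel2)
      qed
      have Lne: "y \<noteq> Inf S * x" using nB bb by blast
      have xr: "x * (y - Inf S * x) < 2 * w" using zrel2 zU by blast
      have "y > Inf S * x \<longleftrightarrow> (x, y, w) \<in> Tst S"
      proof (cases "w > 0")
        case True then show ?thesis unfolding T_iff abm_def using bb by auto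
      next
        case False
        then have wn: "w < 0" using w0 by simp
        have neg: "x * (y - Inf S * x) < 0" using xr wn by linarith
        have "abp S x y \<longleftrightarrow> y > Inf S * x"
        proof (cases "bdd_above S")
          case True
          have le: "Inf S \<le> Sup S" using IS True bb by blast
          show ?thesis
          proof (cases "x > 0")
            case True
            then have "y < Inf S * x" using sign_lemma2[OF neg] by blast
            moreover have "Inf S * x \<le> Sup S * x" using le True by (simp add: mult_right_mono)
            ultimately show ?thesis unfolding abp_def using \<open>bdd_above S\<close> by auto
          next
            case False
            then have xn: "x < 0" using x0 by simp
            then have "y > Inf S * x" using sign_lemma2[OF neg] by blast
            moreover have "Sup S * x \<le> Inf S * x" using le xn by (simp add: mult_right_mono_neg)
            ultimately show ?thesis unfolding abp_def using \<open>bdd_above S\<close> by auto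
          qed
        next
          case False
          then show ?thesis unfolding abp_def using sign_lemma2[OF neg] x0
            by (cases "x > 0") auto
        qed
        then show ?thesis unfolding T_iff using wn by auto
      qed
      then show ?thesis using lim Lne by blast
    qed
  next
    case A: False
    have ubd: "\<forall>b\<in>S. b \<le> - 2 * z / x\<^sup>2" using A by auto
    then have ba: "bdd_above S" by (auto simp: bdd_above_def)
    have "Sup S \<le> - 2 * z / x\<^sup>2" using ubd Sne by (simp add: cSup_least)
    moreover have "z \<noteq> - Sup S * x\<^sup>2 / 2" using nA ba by blast
    ultimately have "Sup S < - 2 * z / x\<^sup>2"
      using xx by (cases "- 2 * z / x\<^sup>2 = Sup S") (auto simp: field_simps)
    then have zL: "z < - Sup S * x\<^sup>2 / 2" using wgt by blast
    have lim: "((\<lambda>t. F (t * x) (t\<^sup>2 * z) / t) \<longlongrightarrow> Sup S * x) at_top"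
    proof (rule Llim[OF rF _ _ zL])
      show "\<forall>b\<in>Sl F. b \<le> Sup S" using ba unfolding S_def by (simp add: cSup_upper)
      show "\<forall>e>0. \<exists>b\<in>Sl F. b > Sup S - e" using ba Sne unfolding S_def
        by (metis diff_less_eq less_add_same_cancel1 less_cSup_iff)
    qed
    have Lne: "y \<noteq> Sup S * x" using nA ba by blast
    have xr: "x * (y - Sup S * x) > 2 * w" using zrel zL by blast
    have "y > Sup S * x \<longleftrightarrow> (x, y, w) \<in> Tst S"
    proof (cases "w < 0")
      case True then show ?thesis unfolding T_iff abp_def using ba by auto
    next
      case False
      then have wp: "w > 0" using w0 by simp
      have pos: "x * (y - Sup S * x) > 0" using xr wp by linarith
      have "abm S x y \<longleftrightarrow> y > Sup S * x"
      proof (cases "bdd_below S")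
        case True
        have le: "Inf S \<le> Sup S" using IS True ba by blast
        show ?thesis
        proof (cases "x > 0")
          case True
          then have "y > Sup S * x" using sign_lemma[OF pos] by blast
          moreover have "Inf S * x \<le> Sup S * x" using le True by (simp add: mult_right_mono)
          ultimately show ?thesis unfolding abm_def using \<open>bdd_below S\<close> by auto
        next
          case False
          then have xn: "x < 0" using x0 by simp
          then have "y < Sup S * x" using sign_lemma[OF pos] by blast
          moreover have "Sup S * x \<le> Inf S * x" using le xn by (simp add: mult_right_mono_neg)
          ultimately show ?thesis unfolding abm_def using \<open>bdd_below S\<close> by auto
        qed
      next
        case False
        then show ?thesis unfolding abm_def using sign_lemma[OF pos] x0
          by (cases "x > 0") auto
      qed
      then show ?thesis unfolding T_iff using wp by auto
    qed
    then show ?thesis using lim Lne by blast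
  qed
  then obtain L where lim: "((\<lambda>t. F (t * x) (t\<^sup>2 * z) / t) \<longlongrightarrow> L) at_top" and Lne: "y \<noteq> L"
    and Lt: "y > L \<longleftrightarrow> (x, y, w) \<in> Tst S" by blast
  show ?thesis using tendsto_side[OF lim Lne] unfolding Lt S_def z_def .
qed

lemma negl_null: assumes "negligible S" shows "\<exists>N\<in>null_sets lborel. S \<subseteq> N"
proof -
  have "S \<in> null_sets lebesgue" using assms by (simp add: negligible_iff_null_sets)
  then show ?thesis by (simp add: null_sets_completion_iff2)
qed

lemma sdil_cont: "continuous_on UNIV (sdil t)"
proof -
  have "sdil t = (\<lambda>p. (t * fst p, t * fst (snd p), t\<^sup>2 * snd (snd p)))"
    by (auto simp: sdil_def split: prod.splits)
  then show ?thesis by (simp add: continuous_intros)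
qed

lemma conv_lemma:
  fixes E T T' N :: "heis set"
  assumes E: "open E" and Tb: "T' \<in> sets borel" and N: "N \<in> null_sets lborel"
    and agree: "\<And>p. p \<notin> N \<Longrightarrow> p \<in> T \<longleftrightarrow> p \<in> T'"
    and pw: "\<And>p. p \<notin> N \<Longrightarrow> eventually (\<lambda>t. sdil t p \<in> E \<longleftrightarrow> p \<in> T') at_top"
  shows "local_conv (\<lambda>t. sdil t -` E) T"
  unfolding local_conv_def
proof (intro allI impI)
  fix C :: "heis set" assume C: "compact C"
  have Cb: "C \<in> sets lborel" using C by (simp add: compact_imp_closed borel_closed)
  have Cf: "emeasure lborel C < \<infinity>" using emeasure_bounded_finite[OF compact_imp_bounded[OF C]] .
  define B where "B = (\<lambda>t. ((sdil t -` E - T') \<union> (T' - sdil t -` E)) \<inter> C)"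
  have Gb: "sdil t -` E \<in> sets lborel" for t
  proof -
    have "open (sdil t -` E)" using open_vimage[OF E sdil_cont] .
    then show ?thesis by simp
  qed
  have Tb': "T' \<in> sets lborel" using Tb by simp
  have Bb: "B t \<in> sets lborel" for t unfolding B_def using Gb Tb' Cb by auto
  have BC: "B t \<subseteq> C" for t unfolding B_def by auto
  have Bf: "emeasure lborel (B t) < \<infinity>" for t
    using emeasure_mono[OF BC Cb] Cf by (meson le_less_trans)
  have p1: "(\<lambda>_. 0 :: real) \<in> borel_measurable lborel" by simp
  have p2: "\<And>t. (indicator (B t) :: heis \<Rightarrow> real) \<in> borel_measurable lborel" using Bb by simp
  have p3: "integrable lborel (indicator C :: heis \<Rightarrow> real)" using Cb Cf by simp
  have p4: "AE x in lborel. ((\<lambda>i. indicator (B i) x :: real) \<longlongrightarrow> 0) at_top"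
  proof (rule AE_I'[OF N])
    show "{x \<in> space lborel. \<not> ((\<lambda>i. indicator (B i) x :: real) \<longlongrightarrow> 0) at_top} \<subseteq> N"
    proof safe
      fix x assume nt: "\<not> ((\<lambda>i. indicator (B i) x :: real) \<longlongrightarrow> 0) at_top"
      show "x \<in> N"
      proof (rule ccontr)
        assume "x \<notin> N"
        then have "eventually (\<lambda>t. sdil t x \<in> E \<longleftrightarrow> x \<in> T') at_top" by (rule pw)
        then have "eventually (\<lambda>t. (indicator (B t) x :: real) = 0) at_top"
          by eventually_elim (auto simp: B_def indicator_def)
        then have "((\<lambda>i. indicator (B i) x :: real) \<longlongrightarrow> 0) at_top" by (rule tendsto_eventually)
        with nt show False by simp
      qed
    qed
  qed
  have p5: "\<forall>\<^sub>F i in at_top. AE x in lborel. norm (indicator (B i) x :: real) \<le> indicator C x"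
  proof (rule always_eventually, rule allI, rule AE_I2)
    fix i x
    show "norm (indicator (B i) x :: real) \<le> indicator C x" using BC[of i] by (auto simp: indicator_def)
  qed
  note int = integral_dominated_convergence_at_top[of "\<lambda>_. 0 :: real" lborel "\<lambda>t. indicator (B t)" "indicator C", OF p1 p2 p3 p4 p5]
  have meas: "((\<lambda>t. measure lborel (B t)) \<longlongrightarrow> 0) at_top" using int by simp
  then have em: "((\<lambda>t. ennreal (measure lborel (B t))) \<longlongrightarrow> ennreal 0) at_top"
    by (rule tendsto_ennrealI)
  have le: "emeasure lborel (((sdil t -` E - T) \<union> (T - sdil t -` E)) \<inter> C) \<le> ennreal (measure lborel (B t))" for t
  proof -
    have "((sdil t -` E - T) \<union> (T - sdil t -` E)) \<inter> C \<subseteq> B t \<union> N"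
      unfolding B_def using agree by blast
    moreover have "B t \<union> N \<in> sets lborel" using Bb N by auto
    ultimately have "emeasure lborel (((sdil t -` E - T) \<union> (T - sdil t -` E)) \<inter> C) \<le> emeasure lborel (B t \<union> N)"
      by (rule emeasure_mono)
    also have "\<dots> = emeasure lborel (B t)" using emeasure_Un_null_set[OF Bb N] .
    also have "\<dots> = ennreal (measure lborel (B t))" using Bf[of t] by (intro emeasure_eq_ennreal_measure) auto
    finally show ?thesis .
  qed
  show "((\<lambda>t. emeasure lborel (((sdil t -` E - T) \<union> (T - sdil t -` E)) \<inter> C)) \<longlongrightarrow> 0) at_top"
    by (rule tendsto_sandwich[OF _ _ tendsto_const em[simplified]]) (auto simp: le)
qed

lemma negl_plane:
  fixes a b c d :: real
  assumes "(a, b, c) \<noteq> (0, 0, 0)"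
  shows "negligible {p :: heis. a * fst p + b * fst (snd p) + c * snd (snd p) = d}"
proof -
  have "{p :: heis. a * fst p + b * fst (snd p) + c * snd (snd p) = d} = {p. (a, b, c) \<bullet> p = d}"
    by (auto simp: inner_prod_def)
  moreover have "(a, b, c) \<noteq> (0 :: heis)" using assms by (simp add: zero_prod_def)
  ultimately show ?thesis using negligible_hyperplane[of "(a, b, c)" d] by simp
qed

lemma fst_diff: "fst differentiable F"
  by (rule bounded_linear_imp_differentiable[OF bounded_linear_fst])
lemma snd_diff: "snd differentiable F"
  by (rule bounded_linear_imp_differentiable[OF bounded_linear_snd])

lemma negl_quad:
  fixes \<beta> :: real
  shows "negligible {p :: heis. snd (snd p) - fst p * fst (snd p) / 2 = - \<beta> * (fst p)\<^sup>2 / 2}"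
proof -
  define g where "g = (\<lambda>q :: real \<times> real. (fst q, snd q, fst q * snd q / 2 - \<beta> * (fst q)\<^sup>2 / 2))"
  have "{p :: heis. snd (snd p) - fst p * fst (snd p) / 2 = - \<beta> * (fst p)\<^sup>2 / 2} = g ` UNIV"
  proof (rule set_eqI)
    fix p :: heis
    obtain x y w where p: "p = (x, y, w)" by (cases p) auto
    show "p \<in> {p. snd (snd p) - fst p * fst (snd p) / 2 = - \<beta> * (fst p)\<^sup>2 / 2} \<longleftrightarrow> p \<in> g ` UNIV"
    proof
      assume "p \<in> {p. snd (snd p) - fst p * fst (snd p) / 2 = - \<beta> * (fst p)\<^sup>2 / 2}"
      then have "p = g (x, y)" unfolding g_def p by (simp add: algebra_simps)
      then show "p \<in> g ` UNIV" by blast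
    next
      assume "p \<in> g ` UNIV"
      then show "p \<in> {p. snd (snd p) - fst p * fst (snd p) / 2 = - \<beta> * (fst p)\<^sup>2 / 2}"
        unfolding g_def by auto
    qed
  qed
  moreover have "g differentiable_on UNIV"
    unfolding g_def differentiable_on_def by (auto intro!: derivative_intros fst_diff snd_diff)
  moreover have "DIM(real \<times> real) < DIM(heis)" by simp
  ultimately show ?thesis using negligible_differentiable_image_lowdim by metis
qed

lemma lin_arctan: "y * cos (arctan b) - x * sin (arctan b) > 0 \<longleftrightarrow> y > b * x"
proof -
  have sp: "sqrt (1 + b\<^sup>2) > 0" by (simp add: add_pos_nonneg)
  have "y * cos (arctan b) - x * sin (arctan b) = (y - b * x) / sqrt (1 + b\<^sup>2)"
    by (simp add: cos_arctan sin_arctan diff_divide_distrib)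
  then show ?thesis using sp by (simp add: zero_less_divide_iff)
qed

lemma bfun_char:
  fixes r x y w :: real
  assumes r: "r \<ge> 0" and x0: "x \<noteq> 0" and w0: "w \<noteq> 0"
  shows "y > bfun r x (w - x * y / 2) \<longleftrightarrow> (w < 0 \<and> y > r * x) \<or> (w > 0 \<and> y > - r * x)"
proof (cases "r = 0")
  case True
  then show ?thesis using w0 by (auto simp: bfun_def)
next
  case False
  then have rp: "r > 0" using r by simp
  define \<zeta> where "\<zeta> = w - x * y / 2"
  have K1: "\<zeta> < - (r / 2) * x\<^sup>2 \<longleftrightarrow> x * (y - r * x) > 2 * w"
    unfolding \<zeta>_def by (simp add: power2_eq_square field_simps)
  have K3: "\<zeta> > (r / 2) * x\<^sup>2 \<longleftrightarrow> x * (y - (- r) * x) < 2 * w"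
    unfolding \<zeta>_def by (simp add: power2_eq_square field_simps)
  have rx: "x > 0 \<Longrightarrow> r * x > 0" "x < 0 \<Longrightarrow> r * x < 0" using rp by (auto simp: mult_pos_pos mult_pos_neg)
  show ?thesis
  proof (cases "\<zeta> < - (r / 2) * x\<^sup>2")
    case B1: True
    have bf: "bfun r x \<zeta> = r * x" using B1 False by (simp add: bfun_def)
    have k: "x * (y - r * x) > 2 * w" using B1 K1 by blast
    show ?thesis
    proof (cases "w < 0")
      case True then show ?thesis using bf unfolding \<zeta>_def by auto
    next
      case False
      then have wp: "w > 0" using w0 by simp
      then have kp: "x * (y - r * x) > 0" using k by linarith
      have "x * (y - (- r) * x) = x * (y - r * x) + 2 * r * x\<^sup>2" by (simp add: power2_eq_square algebra_simps)
      moreover have "2 * r * x\<^sup>2 \<ge> 0" using rp by simp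
      ultimately have kp2: "x * (y - (- r) * x) > 0" using kp by linarith
      show ?thesis using sign_lemma[OF kp] sign_lemma[OF kp2] rx x0 wp bf unfolding \<zeta>_def
        by (cases "x > 0") auto
    qed
  next
    case nB1: False
    show ?thesis
    proof (cases "\<zeta> > (r / 2) * x\<^sup>2")
      case B3: True
      have bf: "bfun r x \<zeta> = - r * x" using B3 nB1 False by (simp add: bfun_def)
      have k: "x * (y - (- r) * x) < 2 * w" using B3 K3 by blast
      show ?thesis
      proof (cases "w > 0")
        case True then show ?thesis using bf unfolding \<zeta>_def by auto
      next
        case False
        then have wn: "w < 0" using w0 by simp
        then have kn: "x * (y - (- r) * x) < 0" using k by linarith
        show ?thesis using sign_lemma2[OF kn] rx x0 wn bf unfolding \<zeta>_def
          by (cases "x > 0") auto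
      qed
    next
      case nB3: False
      have ab: "\<bar>\<zeta>\<bar> \<le> (r / 2) * x\<^sup>2" using nB1 nB3 by linarith
      have bf: "bfun r x \<zeta> = - 2 * \<zeta> / x" using ab nB1 False by (simp add: bfun_def)
      have Lq: "- 2 * \<zeta> / x = y - 2 * w / x" unfolding \<zeta>_def using x0 by (simp add: field_simps)
      have yL: "y > - 2 * \<zeta> / x \<longleftrightarrow> w / x > 0" unfolding Lq by (simp add: zero_less_divide_iff)
      have k1: "x * (y - r * x) \<le> 2 * w" using nB1 K1 by linarith
      have k3: "x * (y - (- r) * x) \<ge> 2 * w" using nB3 K3 by linarith
      show ?thesis
      proof (cases "w < 0")
        case True
        then have kn: "x * (y - r * x) < 0" using k1 by linarith
        show ?thesis using sign_lemma2[OF kn] x0 True bf yL unfolding \<zeta>_def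
          by (cases "x > 0") (auto simp: zero_less_divide_iff)
      next
        case False
        then have wp: "w > 0" using w0 by simp
        then have kp: "x * (y - (- r) * x) > 0" using k3 by linarith
        show ?thesis using sign_lemma[OF kp] x0 wp bf yL unfolding \<zeta>_def
          by (cases "x > 0") (auto simp: zero_less_divide_iff)
      qed
    qed
  qed
qed

lemma rot_minus: "rot (- \<theta>) (x, y, w) = (x * cos \<theta> + y * sin \<theta>, - x * sin \<theta> + y * cos \<theta>, w)"
  by (simp add: rot_def)

lemma rot_image: "p \<in> rot \<theta> ` A \<longleftrightarrow> rot (- \<theta>) p \<in> A"
proof -
  have inv1: "rot \<theta> (rot (- \<theta>) q) = q" for q
  proof -
    obtain x y w where q: "q = (x, y, w)" by (cases q) auto
    have "(x * cos \<theta> + y * sin \<theta>) * cos \<theta> - (- x * sin \<theta> + y * cos \<theta>) * sin \<theta> = x * ((sin \<theta>)\<^sup>2 + (cos \<theta>)\<^sup>2)"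
      by (simp add: power2_eq_square algebra_simps del: sin_cos_squared_add sin_cos_squared_add2 sin_cos_squared_add3)
    then have e1: "(x * cos \<theta> + y * sin \<theta>) * cos \<theta> - (- x * sin \<theta> + y * cos \<theta>) * sin \<theta> = x" by simp
    have "(x * cos \<theta> + y * sin \<theta>) * sin \<theta> + (- x * sin \<theta> + y * cos \<theta>) * cos \<theta> = y * ((sin \<theta>)\<^sup>2 + (cos \<theta>)\<^sup>2)"
      by (simp add: power2_eq_square algebra_simps del: sin_cos_squared_add sin_cos_squared_add2 sin_cos_squared_add3)
    then have e2: "(x * cos \<theta> + y * sin \<theta>) * sin \<theta> + (- x * sin \<theta> + y * cos \<theta>) * cos \<theta> = y" by simp
    have "rot \<theta> (rot (- \<theta>) q) = ((x * cos \<theta> + y * sin \<theta>) * cos \<theta> - (- x * sin \<theta> + y * cos \<theta>) * sin \<theta>,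
       (x * cos \<theta> + y * sin \<theta>) * sin \<theta> + (- x * sin \<theta> + y * cos \<theta>) * cos \<theta>, w)"
      unfolding q rot_minus by (simp add: rot_def)
    then show ?thesis unfolding e1 e2 q .
  qed
  have inv2: "rot (- \<theta>) (rot \<theta> q) = q" for q
  proof -
    obtain x y w where q: "q = (x, y, w)" by (cases q) auto
    have "(x * cos \<theta> - y * sin \<theta>) * cos \<theta> + (x * sin \<theta> + y * cos \<theta>) * sin \<theta> = x * ((sin \<theta>)\<^sup>2 + (cos \<theta>)\<^sup>2)"
      by (simp add: power2_eq_square algebra_simps del: sin_cos_squared_add sin_cos_squared_add2 sin_cos_squared_add3)
    then have e1: "(x * cos \<theta> - y * sin \<theta>) * cos \<theta> + (x * sin \<theta> + y * cos \<theta>) * sin \<theta> = x" by simp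
    have "- (x * cos \<theta> - y * sin \<theta>) * sin \<theta> + (x * sin \<theta> + y * cos \<theta>) * cos \<theta> = y * ((sin \<theta>)\<^sup>2 + (cos \<theta>)\<^sup>2)"
      by (simp add: power2_eq_square algebra_simps del: sin_cos_squared_add sin_cos_squared_add2 sin_cos_squared_add3)
    then have e2: "- (x * cos \<theta> - y * sin \<theta>) * sin \<theta> + (x * sin \<theta> + y * cos \<theta>) * cos \<theta> = y" by simp
    have "rot (- \<theta>) (rot \<theta> q) = ((x * cos \<theta> - y * sin \<theta>) * cos \<theta> + (x * sin \<theta> + y * cos \<theta>) * sin \<theta>,
        - (x * cos \<theta> - y * sin \<theta>) * sin \<theta> + (x * sin \<theta> + y * cos \<theta>) * cos \<theta>, w)"
      unfolding q by (simp add: rot_def rot_minus algebra_simps)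
    then show ?thesis unfolding e1 e2 q .
  qed
  show ?thesis
  proof
    assume "p \<in> rot \<theta> ` A"
    then obtain q where "q \<in> A" "p = rot \<theta> q" by blast
    then show "rot (- \<theta>) p \<in> A" using inv2 by simp
  next
    assume "rot (- \<theta>) p \<in> A"
    then show "p \<in> rot \<theta> ` A" using inv1[of p] by (metis image_eqI)
  qed
qed

lemma Nex_negl: "negligible (Nex S)"
proof -
  define P where "P = (\<lambda>a b c. {p :: heis. a * fst p + b * fst (snd p) + c * snd (snd p) = 0})"
  define Q where "Q = (\<lambda>\<beta>. {p :: heis. snd (snd p) - fst p * fst (snd p) / 2 = - \<beta> * (fst p)\<^sup>2 / 2})"
  have sub: "Nex S \<subseteq> P 1 0 0 \<union> P 0 0 1 \<union> P (- Sup S) 1 0 \<union> Q (Sup S) \<union> P (- Inf S) 1 0 \<union> Q (Inf S)"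
  proof
    fix p assume "p \<in> Nex S"
    moreover obtain x y w where p: "p = (x, y, w)" by (cases p) auto
    ultimately have "x = 0 \<or> w = 0 \<or> y = Sup S * x \<or> w - x * y / 2 = - Sup S * x\<^sup>2 / 2
        \<or> y = Inf S * x \<or> w - x * y / 2 = - Inf S * x\<^sup>2 / 2" unfolding Nex_def by auto
    then show "p \<in> P 1 0 0 \<union> P 0 0 1 \<union> P (- Sup S) 1 0 \<union> Q (Sup S) \<union> P (- Inf S) 1 0 \<union> Q (Inf S)"
      unfolding P_def Q_def p by auto
  qed
  have n1: "negligible (P a b c)" if "(a, b, c) \<noteq> (0, 0, 0)" for a b c
    unfolding P_def using negl_plane[OF that, of 0] .
  have n2: "negligible (Q \<beta>)" for \<beta> unfolding Q_def by (rule negl_quad)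
  have "negligible (P 1 0 0 \<union> P 0 0 1 \<union> P (- Sup S) 1 0 \<union> Q (Sup S) \<union> P (- Inf S) 1 0 \<union> Q (Inf S))"
    by (intro negligible_Un n1 n2) auto
  then show ?thesis using sub by (rule negligible_subset)
qed

lemma N2_negl: "negligible {p :: heis. snd (snd p) = 0 \<or> fst p * cos \<theta> + fst (snd p) * sin \<theta> = 0}"
proof -
  have nz: "(cos \<theta>, sin \<theta>, 0::real) \<noteq> (0, 0, 0)"
  proof
    assume "(cos \<theta>, sin \<theta>, 0::real) = (0, 0, 0)"
    then have "(sin \<theta>)\<^sup>2 + (cos \<theta>)\<^sup>2 = 0" by simp
    then show False by simp
  qed
  have A: "negligible {p :: heis. 0 * fst p + 0 * fst (snd p) + 1 * snd (snd p) = 0}"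
    by (rule negl_plane) simp
  have B: "negligible {p :: heis. cos \<theta> * fst p + sin \<theta> * fst (snd p) + 0 * snd (snd p) = 0}"
    by (rule negl_plane[OF nz])
  have sub: "{p :: heis. snd (snd p) = 0 \<or> fst p * cos \<theta> + fst (snd p) * sin \<theta> = 0} \<subseteq>
        {p. 0 * fst p + 0 * fst (snd p) + 1 * snd (snd p) = 0} \<union>
        {p. cos \<theta> * fst p + sin \<theta> * fst (snd p) + 0 * snd (snd p) = 0}"
  proof
    fix p :: heis
    assume "p \<in> {p :: heis. snd (snd p) = 0 \<or> fst p * cos \<theta> + fst (snd p) * sin \<theta> = 0}"
    then have "snd (snd p) = 0 \<or> fst p * cos \<theta> + fst (snd p) * sin \<theta> = 0" by simp
    moreover have "fst p * cos \<theta> + fst (snd p) * sin \<theta> = cos \<theta> * fst p + sin \<theta> * fst (snd p) + 0 * snd (snd p)"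
      by simp
    ultimately show "p \<in> {p. 0 * fst p + 0 * fst (snd p) + 1 * snd (snd p) = 0} \<union>
        {p. cos \<theta> * fst p + sin \<theta> * fst (snd p) + 0 * snd (snd p) = 0}" by auto
  qed
  show ?thesis using negligible_subset[OF negligible_Un[OF A B] sub] .
qed

lemma abp_angle:
  "abp S x y \<longleftrightarrow> y * cos (if bdd_above S then arctan (Sup S) else pi / 2)
                 - x * sin (if bdd_above S then arctan (Sup S) else pi / 2) > 0"
proof (cases "bdd_above S")
  case True then show ?thesis unfolding abp_def using lin_arctan[of y "Sup S" x] by simp
next
  case False then show ?thesis unfolding abp_def by simp
qed

lemma abm_angle:
  "abm S x y \<longleftrightarrow> y * cos (if bdd_below S then arctan (Inf S) else - pi / 2)
                 - x * sin (if bdd_below S then arctan (Inf S) else - pi / 2) > 0"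
proof (cases "bdd_below S")
  case True then show ?thesis unfolding abm_def using lin_arctan[of y "Inf S" x] by simp
next
  case False then show ?thesis unfolding abm_def by simp
qed

lemma tan_lin1:
  fixes a x y :: real
  assumes "cos a > 0" shows "y * cos a - x * sin a > 0 \<longleftrightarrow> y > tan a * x"
proof -
  have cn: "cos a \<noteq> 0" using assms by simp
  have sa: "sin a = tan a * cos a" using cn by (simp add: tan_def)
  have "y * cos a - x * sin a = cos a * (y - tan a * x)" unfolding sa by (simp add: algebra_simps)
  then show ?thesis using assms by (simp add: zero_less_mult_iff)
qed

lemma tan_lin2:
  fixes a x y :: real
  assumes "cos a > 0" shows "y * cos a + x * sin a > 0 \<longleftrightarrow> y > - tan a * x"
proof -
  have cn: "cos a \<noteq> 0" using assms by simp
  have sa: "sin a = tan a * cos a" using cn by (simp add: tan_def)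
  have "y * cos a + x * sin a = cos a * (y + tan a * x)" unfolding sa by (simp add: algebra_simps)
  then show ?thesis using assms by (auto simp: zero_less_mult_iff)
qed

lemma rot_trig1:
  fixes x y \<theta> \<alpha> :: real
  shows "(- x * sin \<theta> + y * cos \<theta>) * cos \<alpha> - (x * cos \<theta> + y * sin \<theta>) * sin \<alpha>
     = y * cos (\<theta> + \<alpha>) - x * sin (\<theta> + \<alpha>)"
  apply (subst cos_add, subst sin_add) by (simp add: algebra_simps)

lemma rot_trig2:
  fixes x y \<theta> \<alpha> :: real
  shows "(- x * sin \<theta> + y * cos \<theta>) * cos \<alpha> + (x * cos \<theta> + y * sin \<theta>) * sin \<alpha>
     = y * cos (\<theta> - \<alpha>) - x * sin (\<theta> - \<alpha>)"
  apply (subst cos_diff, subst sin_diff) by (simp add: algebra_simps)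

lemma open_epi:
  assumes cf: "continuous_on UNIV (\<lambda>(x, z). f x z)"
  shows "open (epi_Y f)"
proof -
  define g where "g = (\<lambda>p :: heis. (fst p, snd (snd p) - fst p * fst (snd p) / 2))"
  have eq: "epi_Y f = {p :: heis. ((\<lambda>(x, z). f x z) \<circ> g) p < fst (snd p)}"
    unfolding epi_Y_eq g_def by auto
  have cg: "continuous_on UNIV g" unfolding g_def by (intro continuous_intros) auto
  have cf': "continuous_on (g ` UNIV) (\<lambda>(x, z). f x z)" by (rule continuous_on_subset[OF cf]) simp
  have cc: "continuous_on UNIV ((\<lambda>(x, z). f x z) \<circ> g)" by (rule continuous_on_compose[OF cg cf'])
  have cy: "continuous_on UNIV (\<lambda>p :: heis. fst (snd p))" by (intro continuous_intros)
  show ?thesis unfolding eq by (rule open_Collect_less[OF cc cy])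
qed

lemma open_Tst: "open (Tst S)"
proof -
  have cx: "continuous_on UNIV (\<lambda>p :: heis. fst p)" by (intro continuous_intros)
  have cy: "continuous_on UNIV (\<lambda>p :: heis. fst (snd p))" by (intro continuous_intros)
  have cw: "continuous_on UNIV (\<lambda>p :: heis. snd (snd p))" by (intro continuous_intros)
  have c0: "continuous_on UNIV (\<lambda>p :: heis. 0 :: real)" by (intro continuous_intros)
  have cs: "continuous_on UNIV (\<lambda>p :: heis. c * fst p)" for c by (intro continuous_intros)
  have o1: "open {p :: heis. abp S (fst p) (fst (snd p))}"
  proof (cases "bdd_above S")
    case True
    then have "{p :: heis. abp S (fst p) (fst (snd p))} = {p. Sup S * fst p < fst (snd p)}" by (simp add: abp_def)
    then show ?thesis using open_Collect_less[OF cs cy] by simp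
  next
    case False
    then have "{p :: heis. abp S (fst p) (fst (snd p))} = {p. fst p < 0}" by (simp add: abp_def)
    then show ?thesis using open_Collect_less[OF cx c0] by simp
  qed
  have o2: "open {p :: heis. abm S (fst p) (fst (snd p))}"
  proof (cases "bdd_below S")
    case True
    then have "{p :: heis. abm S (fst p) (fst (snd p))} = {p. Inf S * fst p < fst (snd p)}" by (simp add: abm_def)
    then show ?thesis using open_Collect_less[OF cs cy] by simp
  next
    case False
    then have "{p :: heis. abm S (fst p) (fst (snd p))} = {p. 0 < fst p}" by (simp add: abm_def)
    then show ?thesis using open_Collect_less[OF c0 cx] by simp
  qed
  have "Tst S = ({p. snd (snd p) < 0} \<inter> {p. abp S (fst p) (fst (snd p))}) \<union>
                ({p. 0 < snd (snd p)} \<inter> {p. abm S (fst p) (fst (snd p))})"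
    unfolding Tst_def by auto
  moreover have "open {p :: heis. snd (snd p) < 0}" using open_Collect_less[OF cw c0] .
  moreover have "open {p :: heis. 0 < snd (snd p)}" using open_Collect_less[OF c0 cw] .
  ultimately show ?thesis using o1 o2 by auto
qed

theorem lemma4p1:
  fixes f :: "real \<Rightarrow> real \<Rightarrow> real"
  assumes "continuous_on UNIV (\<lambda>(x, z). f x z)"
    and "ruled_surface (graph_Y f)"
  shows "\<exists>u \<theta>. u \<ge> 0 \<and>
           local_conv (\<lambda>t. sdil t -` epi_Y f) (rot \<theta> ` BP u) \<and>
           (u = 0 \<longrightarrow> (\<exists>a b c. (a, b) \<noteq> (0::real, 0::real) \<and>
               graph_Y f = {(x, y, z). a * x + b * y = c}))"
proof -
  have rF: "rulF f" using assms(2) by (rule ruled_rulF)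
  define S where "S = Sl f"
  have Sne: "S \<noteq> {}" unfolding S_def using Sl_nonempty[OF rF] .
  define \<phi>p where "\<phi>p = (if bdd_above S then arctan (Sup S) else pi / 2)"
  define \<phi>m where "\<phi>m = (if bdd_below S then arctan (Inf S) else - pi / 2)"
  define \<theta> where "\<theta> = (\<phi>p + \<phi>m) / 2"
  define \<alpha> where "\<alpha> = (\<phi>p - \<phi>m) / 2"
  define inf where "inf = (\<not> bdd_above S \<and> \<not> bdd_below S)"
  define u :: ereal where "u = (if inf then \<infinity> else ereal (tan \<alpha>))"
  have pb: "- (pi / 2) < \<phi>p" "\<phi>p \<le> pi / 2"
    unfolding \<phi>p_def using arctan_lbound arctan_ubound by (auto simp: less_imp_le)
  have mb: "- (pi / 2) \<le> \<phi>m" "\<phi>m < pi / 2"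
    unfolding \<phi>m_def using arctan_lbound arctan_ubound by (auto simp: less_imp_le)
  have le: "\<phi>m \<le> \<phi>p"
  proof (cases "bdd_above S \<and> bdd_below S")
    case True
    have "Inf S \<le> Sup S" using True Sne by (meson all_not_in_conv cInf_lower cSup_upper order_trans)
    then show ?thesis using True unfolding \<phi>p_def \<phi>m_def by (simp add: arctan_le_iff)
  next
    case False
    then show ?thesis unfolding \<phi>p_def \<phi>m_def
      using arctan_lbound arctan_ubound by (auto simp: less_imp_le)
  qed
  have a0: "0 \<le> \<alpha>" using le unfolding \<alpha>_def by simp
  have afin: "\<not> inf \<Longrightarrow> \<alpha> < pi / 2"
  proof -
    assume "\<not> inf"
    then have "\<phi>p < pi / 2 \<or> - (pi / 2) < \<phi>m" unfolding inf_def \<phi>p_def \<phi>m_def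
      using arctan_lbound arctan_ubound by auto
    then show "\<alpha> < pi / 2" unfolding \<alpha>_def using pb mb by auto
  qed
  have cpos: "\<not> inf \<Longrightarrow> cos \<alpha> > 0" using afin a0 by (intro cos_gt_zero_pi) auto
  have tpos: "\<not> inf \<Longrightarrow> tan \<alpha> \<ge> 0"
  proof -
    assume ni: "\<not> inf"
    show "tan \<alpha> \<ge> 0"
    proof (cases "\<alpha> = 0")
      case True then show ?thesis by simp
    next
      case False then show ?thesis using tan_gt_zero[of \<alpha>] a0 afin[OF ni] by simp
    qed
  qed
  have u0: "u \<ge> 0" unfolding u_def using tpos by auto
  have thp: "\<theta> + \<alpha> = \<phi>p" and tmm: "\<theta> - \<alpha> = \<phi>m" unfolding \<theta>_def \<alpha>_def by (simp_all add: field_simps)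
  obtain N0 where N0: "N0 \<in> null_sets lborel"
    and N0s: "Nex S \<union> {p :: heis. snd (snd p) = 0 \<or> fst p * cos \<theta> + fst (snd p) * sin \<theta> = 0} \<subseteq> N0"
    using negl_null[OF negligible_Un[OF Nex_negl N2_negl]] by blast
  have agree: "p \<in> rot \<theta> ` BP u \<longleftrightarrow> p \<in> Tst S" if pN: "p \<notin> N0" for p
  proof -
    obtain x y w where p: "p = (x, y, w)" by (cases p) auto
    have "p \<notin> {p :: heis. snd (snd p) = 0 \<or> fst p * cos \<theta> + fst (snd p) * sin \<theta> = 0}" using pN N0s by blast
    then have w0: "w \<noteq> 0" and xr: "x * cos \<theta> + y * sin \<theta> \<noteq> 0" unfolding p by auto
    have TS: "p \<in> Tst S \<longleftrightarrow> (w < 0 \<and> abp S x y) \<or> (w > 0 \<and> abm S x y)" unfolding p Tst_def by simp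
    show ?thesis
    proof (cases inf)
      case True
      then have ph: "\<phi>p = pi / 2" "\<phi>m = - pi / 2" unfolding inf_def \<phi>p_def \<phi>m_def by auto
      have th0: "\<theta> = 0" unfolding \<theta>_def ph by simp
      have "p \<in> rot \<theta> ` BP u \<longleftrightarrow> x * w > 0"
        unfolding rot_image p rot_minus th0 u_def using True by (simp add: BP_def)
      also have "\<dots> \<longleftrightarrow> (w < 0 \<and> x < 0) \<or> (w > 0 \<and> x > 0)" by (auto simp: zero_less_mult_iff)
      also have "\<dots> \<longleftrightarrow> p \<in> Tst S" unfolding TS abp_def abm_def using True inf_def by simp
      finally show ?thesis .
    next
      case False
      define r where "r = tan \<alpha>"
      have r0: "r \<ge> 0" using tpos[OF False] r_def by simp
      have cp: "cos \<alpha> > 0" using cpos[OF False] .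
      define x' where "x' = x * cos \<theta> + y * sin \<theta>"
      define y' where "y' = - x * sin \<theta> + y * cos \<theta>"
      have BPe: "BP u = epi_Y (bfun r)" unfolding u_def BP_def r_def using False by simp
      have "p \<in> rot \<theta> ` BP u \<longleftrightarrow> y' > bfun r x' (w - x' * y' / 2)"
        unfolding rot_image p rot_minus BPe epi_Y_eq x'_def y'_def by simp
      also have "\<dots> \<longleftrightarrow> (w < 0 \<and> y' > r * x') \<or> (w > 0 \<and> y' > - r * x')"
        using bfun_char[OF r0 _ w0] xr unfolding x'_def by blast
      also have "y' > r * x' \<longleftrightarrow> abp S x y"
      proof -
        have "y' > r * x' \<longleftrightarrow> y' * cos \<alpha> - x' * sin \<alpha> > 0" using tan_lin1[OF cp] r_def by simp
        also have "y' * cos \<alpha> - x' * sin \<alpha> = y * cos \<phi>p - x * sin \<phi>p"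
          unfolding x'_def y'_def rot_trig1 thp ..
        also have "0 < y * cos \<phi>p - x * sin \<phi>p \<longleftrightarrow> abp S x y" unfolding abp_angle \<phi>p_def ..
        finally show ?thesis .
      qed
      also have "y' > - r * x' \<longleftrightarrow> abm S x y"
      proof -
        have "y' > - r * x' \<longleftrightarrow> y' * cos \<alpha> + x' * sin \<alpha> > 0" using tan_lin2[OF cp] r_def by simp
        also have "y' * cos \<alpha> + x' * sin \<alpha> = y * cos \<phi>m - x * sin \<phi>m"
          unfolding x'_def y'_def rot_trig2 tmm ..
        also have "0 < y * cos \<phi>m - x * sin \<phi>m \<longleftrightarrow> abm S x y" unfolding abm_angle \<phi>m_def ..
        finally show ?thesis .
      qed
      finally show ?thesis unfolding TS .
    qed
  qed
  have pw: "eventually (\<lambda>t. sdil t p \<in> epi_Y f \<longleftrightarrow> p \<in> Tst S) at_top" if pN: "p \<notin> N0" for p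
  proof -
    obtain x y w where p: "p = (x, y, w)" by (cases p) auto
    have "p \<notin> Nex (Sl f)" using pN N0s unfolding S_def by blast
    then have ev: "eventually (\<lambda>t. y > f (t * x) (t\<^sup>2 * (w - x * y / 2)) / t \<longleftrightarrow> p \<in> Tst S) at_top"
      using pointwise_F[OF rF] unfolding p S_def by blast
    show ?thesis using ev eventually_gt_at_top[of 0]
    proof eventually_elim
      case (elim t)
      have "sdil t p \<in> epi_Y f \<longleftrightarrow> t * y > f (t * x) (t\<^sup>2 * w - t * x * (t * y) / 2)"
        unfolding p sdil_def epi_Y_eq by simp
      also have "t\<^sup>2 * w - t * x * (t * y) / 2 = t\<^sup>2 * (w - x * y / 2)" by (simp add: power2_eq_square algebra_simps)
      also have "t * y > f (t * x) (t\<^sup>2 * (w - x * y / 2)) \<longleftrightarrow> y > f (t * x) (t\<^sup>2 * (w - x * y / 2)) / t"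
        using elim(2) by (simp add: pos_divide_less_eq mult.commute)
      finally show ?case using elim(1) by simp
    qed
  qed
  have conv: "local_conv (\<lambda>t. sdil t -` epi_Y f) (rot \<theta> ` BP u)"
    by (rule conv_lemma[OF open_epi[OF assms(1)] _ N0 agree pw]) (simp add: open_Tst)
  have plane: "u = 0 \<longrightarrow> (\<exists>a b c. (a, b) \<noteq> (0::real, 0::real) \<and> graph_Y f = {(x, y, z). a * x + b * y = c})"
  proof
    assume "u = 0"
    then have ni: "\<not> inf" and t0: "tan \<alpha> = 0" unfolding u_def by (auto split: if_splits)
    have "\<alpha> = 0"
    proof (rule ccontr)
      assume "\<alpha> \<noteq> 0"
      then have "tan \<alpha> > 0" using tan_gt_zero[of \<alpha>] a0 afin[OF ni] by simp
      then show False using t0 by simp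
    qed
    then have eqp: "\<phi>p = \<phi>m" unfolding \<alpha>_def by simp
    have bb: "bdd_above S \<and> bdd_below S \<and> Sup S = Inf S"
    proof (cases "bdd_above S"; cases "bdd_below S")
      assume "bdd_above S" "bdd_below S"
      then show ?thesis using eqp unfolding \<phi>p_def \<phi>m_def by (simp add: arctan_eq_iff)
    next
      assume "bdd_above S" "\<not> bdd_below S"
      then show ?thesis using eqp arctan_lbound[of "Sup S"] unfolding \<phi>p_def \<phi>m_def by simp
    next
      assume "\<not> bdd_above S" "bdd_below S"
      then show ?thesis using eqp arctan_ubound[of "Inf S"] unfolding \<phi>p_def \<phi>m_def by simp
    next
      assume "\<not> bdd_above S" "\<not> bdd_below S"
      then show ?thesis using ni unfolding inf_def by simp
    qed
    define \<beta> where "\<beta> = Sup S"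
    have allb: "b = \<beta>" if "b \<in> S" for b
    proof -
      have "b \<le> Sup S" using bb that cSup_upper by blast
      moreover have "Inf S \<le> b" using bb that cInf_lower by blast
      ultimately show ?thesis using bb unfolding \<beta>_def by simp
    qed
    define y0 where "y0 = f 0 0"
    obtain b0 where r0: "rl f 0 b0" using rl_exists[OF rF] by blast
    have F0: "f 0 c = y0" for c
    proof -
      obtain bc where rc: "rl f c bc" using rl_exists[OF rF] by blast
      have "b0 = \<beta>" "bc = \<beta>" using allb r0 rc unfolding S_def Sl_def by auto
      then have "(f 0 c - f 0 0)\<^sup>2 \<le> 0" using rl_disc[OF r0 rc] by simp
      then show ?thesis unfolding y0_def by simp
    qed
    have fl: "f X Z = y0 + \<beta> * X" for X Z
    proof -
      obtain c b where "rl f c b" "f X Z = f 0 c + b * X" using reach[OF rF] by blast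
      moreover have "b = \<beta>" using allb calculation(1) unfolding S_def Sl_def by auto
      ultimately show ?thesis using F0 by simp
    qed
    have "graph_Y f = {(x, y, z). (- \<beta>) * x + 1 * y = y0}"
      unfolding graph_Y_eq fl by auto
    then show "\<exists>a b c. (a, b) \<noteq> (0::real, 0::real) \<and> graph_Y f = {(x, y, z). a * x + b * y = c}"
      by (intro exI[of _ "- \<beta>"] exI[of _ 1] exI[of _ y0]) simp
  qed
  show ?thesis using u0 conv plane by blast
qed

end
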